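(* Consider the graded polynomial ring $\mathbb{C}[x_1,x_2,x_3,y]$ with $\deg x_i=1$, $\deg y=2$. Let $F=y^3+g(x_1,x_2,x_3)y+h(x_1,x_2,x_3)$ and $F'=y^3+g'(x_1,x_2,x_3)y+h'(x_1,x_2,x_3)$, with $g,g'$ homogeneous of degree $4$ and $h,h'$ homogeneous of degree $6$. Let $J=\mathrm{Jac}(F)$, $J'=\mathrm{Jac}(F')$, and let $J^e,J'^e$ be their even-degree subalgebras. Let $\phi\colon J^e\to J'^e$ be an isomorphism of graded $\mathbb{C}$-algebras. Then there is an isomorphism of graded $\mathbb{C}$-algebras $\psi\colon\mathbb{C}[x_i,y]\to\mathbb{C}[x_i,y]$ whose restriction $\mathbb{C}[x_i,y]^e\to\mathbb{C}[x_i,y]^e$ to even-degree parts induces $\phi\colon J^e\to J'^e$.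
   Context: $\mathrm{Jac}(F)=\mathbb{C}[x_1,x_2,x_3,y]/(\partial_yF,\partial_{x_1}F,\partial_{x_2}F,\partial_{x_3}F)$, graded. For a graded ring $R$, $R^e=\bigoplus_{n}R_{2n}$. *)

theory Defs
  imports Complex_Main "HOL-Library.Poly_Mapping" "HOL-Algebra.QuotRing"
begin

datatype var = X1 | X2 | X3 | Y

type_synonym mpoly = "(var \<Rightarrow>\<^sub>0 nat) \<Rightarrow>\<^sub>0 complex"

definition const :: "complex \<Rightarrow> mpoly" where
  "const c = Poly_Mapping.single 0 c"

definition pvar :: "var \<Rightarrow> mpoly" where
  "pvar v = Poly_Mapping.single (Poly_Mapping.single v 1) 1"

definition wdeg :: "(var \<Rightarrow>\<^sub>0 nat) \<Rightarrow> nat" where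
  "wdeg m = Poly_Mapping.lookup m X1 + Poly_Mapping.lookup m X2 + Poly_Mapping.lookup m X3 + 2 * Poly_Mapping.lookup m Y"

definition homogeneous :: "nat \<Rightarrow> mpoly \<Rightarrow> bool" where
  "homogeneous d p \<longleftrightarrow> (\<forall>m\<in>Poly_Mapping.keys p. wdeg m = d)"

definition even_poly :: "mpoly \<Rightarrow> bool" where
  "even_poly p \<longleftrightarrow> (\<forall>m\<in>Poly_Mapping.keys p. even (wdeg m))"

definition y_free :: "mpoly \<Rightarrow> bool" where
  "y_free p \<longleftrightarrow> (\<forall>m\<in>Poly_Mapping.keys p. Poly_Mapping.lookup m Y = 0)"

definition pderiv_var :: "var \<Rightarrow> mpoly \<Rightarrow> mpoly" where
  "pderiv_var v p = (\<Sum>m\<in>Poly_Mapping.keys p.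
      Poly_Mapping.single (m - Poly_Mapping.single v 1) (Poly_Mapping.lookup p m * of_nat (Poly_Mapping.lookup m v)))"

definition mpoly_ring :: "mpoly ring" where
  "mpoly_ring = \<lparr>carrier = UNIV, mult = (*), one = 1, zero = 0, add = (+)\<rparr>"

definition jac_ideal :: "mpoly \<Rightarrow> mpoly set" where
  "jac_ideal F = genideal mpoly_ring (range (\<lambda>v. pderiv_var v F))"

definition jcoset :: "mpoly \<Rightarrow> mpoly \<Rightarrow> mpoly set" where
  "jcoset F p = a_r_coset mpoly_ring (jac_ideal F) p"

definition Jac :: "mpoly \<Rightarrow> mpoly set ring" where
  "Jac F = mpoly_ring Quot (jac_ideal F)"

definition Jac_even :: "mpoly \<Rightarrow> mpoly set ring" where
  "Jac_even F = (Jac F)\<lparr>carrier := {jcoset F p | p. even_poly p}\<rparr>"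

definition graded_alg_iso_even :: "mpoly \<Rightarrow> mpoly \<Rightarrow> (mpoly set \<Rightarrow> mpoly set) \<Rightarrow> bool" where
  "graded_alg_iso_even F F' \<phi> \<longleftrightarrow>
     \<phi> \<in> ring_iso (Jac_even F) (Jac_even F') \<and>
     (\<forall>c p. even_poly p \<longrightarrow>
        \<phi> (jcoset F (const c * p)) = jcoset F' (const c) \<otimes>\<^bsub>Jac F'\<^esub> \<phi> (jcoset F p)) \<and>
     (\<forall>n p. homogeneous (2 * n) p \<longrightarrow>
        (\<exists>q. homogeneous (2 * n) q \<and> \<phi> (jcoset F p) = jcoset F' q))"

definition graded_alg_auto :: "(mpoly \<Rightarrow> mpoly) \<Rightarrow> bool" where
  "graded_alg_auto \<psi> \<longleftrightarrow>
     \<psi> \<in> ring_iso mpoly_ring mpoly_ring \<and>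
     (\<forall>c p. \<psi> (const c * p) = const c * \<psi> p) \<and>
     (\<forall>d p. homogeneous d p \<longrightarrow> homogeneous d (\<psi> p))"

end

theory Submission
  imports Defs
begin

lemma cring_mpoly: "cring mpoly_ring"
  unfolding mpoly_ring_def
  apply unfold_locales
  apply (auto simp: algebra_simps Units_def)
  by (metis add.right_inverse)

lemma ring_mpoly: "ring mpoly_ring"
  using cring_mpoly cring.axioms(1) by blast

lemma mpoly_ring_simps [simp]:
  "carrier mpoly_ring = UNIV" "mult mpoly_ring = (*)" "one mpoly_ring = 1"
  "zero mpoly_ring = 0" "add mpoly_ring = (+)"
  by (simp_all add: mpoly_ring_def)

lemma UNIV_var: "(UNIV :: var set) = {X1, X2, X3, Y}"
  using var.exhaust by auto

definition mk :: "nat \<Rightarrow> nat \<Rightarrow> nat \<Rightarrow> nat \<Rightarrow> (var \<Rightarrow>\<^sub>0 nat)" where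
  "mk a b c d = Poly_Mapping.single X1 a + Poly_Mapping.single X2 b + Poly_Mapping.single X3 c + Poly_Mapping.single Y d"

lemma lookup_mk [simp]:
  "Poly_Mapping.lookup (mk a b c d) X1 = a"
  "Poly_Mapping.lookup (mk a b c d) X2 = b"
  "Poly_Mapping.lookup (mk a b c d) X3 = c"
  "Poly_Mapping.lookup (mk a b c d) Y = d"
  by (simp_all add: mk_def lookup_add lookup_single)

lemma pm_var_eqI:
  fixes m n :: "var \<Rightarrow>\<^sub>0 nat"
  assumes "Poly_Mapping.lookup m X1 = Poly_Mapping.lookup n X1"
    "Poly_Mapping.lookup m X2 = Poly_Mapping.lookup n X2"
    "Poly_Mapping.lookup m X3 = Poly_Mapping.lookup n X3"
    "Poly_Mapping.lookup m Y = Poly_Mapping.lookup n Y"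
  shows "m = n"
proof (rule poly_mapping_eqI)
  fix v show "Poly_Mapping.lookup m v = Poly_Mapping.lookup n v"
    using assms by (cases v) auto
qed

lemma mk_eq_iff [simp]: "mk a b c d = mk a' b' c' d' \<longleftrightarrow> a = a' \<and> b = b' \<and> c = c' \<and> d = d'"
  by (metis lookup_mk pm_var_eqI)

lemma mk_add [simp]: "mk a b c d + mk a' b' c' d' = mk (a+a') (b+b') (c+c') (d+d')"
  by (rule pm_var_eqI) (simp_all add: lookup_add)

lemma mk_expand: "m = mk (Poly_Mapping.lookup m X1) (Poly_Mapping.lookup m X2) (Poly_Mapping.lookup m X3) (Poly_Mapping.lookup m Y)"
  by (rule pm_var_eqI) simp_all

lemma mk_zero [simp]: "mk 0 0 0 0 = 0"
  by (rule pm_var_eqI) simp_all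

lemma wdeg_mk [simp]: "wdeg (mk a b c d) = a + b + c + 2 * d"
  by (simp add: wdeg_def)

lemma wdeg_add: "wdeg (m + n) = wdeg m + wdeg n"
  by (simp add: wdeg_def lookup_add)

lemma wdeg_zero [simp]: "wdeg 0 = 0"
  by (simp add: wdeg_def)

lemma single_var_mk:
  "Poly_Mapping.single X1 k = mk k 0 0 0" "Poly_Mapping.single X2 k = mk 0 k 0 0"
  "Poly_Mapping.single X3 k = mk 0 0 k 0" "Poly_Mapping.single Y k = mk 0 0 0 k"
  by (rule pm_var_eqI; simp add: lookup_single)+

lemma pvar_mk:
  "pvar X1 = Poly_Mapping.single (mk 1 0 0 0) 1" "pvar X2 = Poly_Mapping.single (mk 0 1 0 0) 1"
  "pvar X3 = Poly_Mapping.single (mk 0 0 1 0) 1" "pvar Y = Poly_Mapping.single (mk 0 0 0 1) 1"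
  by (simp_all add: pvar_def single_var_mk)

lemma const_0 [simp]: "const 0 = 0" by (simp add: const_def)
lemma const_1 [simp]: "const 1 = 1" by (simp add: const_def)
lemma const_add: "const (a + b) = const a + const b" by (simp add: const_def single_add)
lemma const_diff: "const (a - b) = const a - const b" by (simp add: const_def single_diff)
lemma const_uminus: "const (- a) = - const a" by (simp add: const_def single_uminus)
lemma const_mult: "const (a * b) = const a * const b" by (simp add: const_def mult_single)
lemma const_single: "const c * Poly_Mapping.single m d = Poly_Mapping.single m (c * d)"
  by (simp add: const_def mult_single)
lemma const_power: "const (a ^ n) = const a ^ n"
  by (induction n) (simp_all add: const_mult)
lemma const_numeral: "const (numeral n) = numeral n"
  by (simp add: const_def)
lemma const_sum: "const (sum f A) = (\<Sum>x\<in>A. const (f x))"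
  by (induction A rule: infinite_finite_induct) (simp_all add: const_add)
lemma const_inj [simp]: "const a = const b \<longleftrightarrow> a = b"
  by (metis const_def lookup_single_eq)
lemma const_eq_0_iff [simp]: "const a = 0 \<longleftrightarrow> a = 0"
  by (metis const_0 const_inj)

lemmas const_simps = const_add const_diff const_uminus const_mult const_power const_numeral

lemma lookup_const: "Poly_Mapping.lookup (const c) m = (if m = 0 then c else 0)"
  by (simp add: const_def lookup_single)


section \<open>Gradings\<close>

lemma pm_sum_single_superset:
  fixes p :: "('a \<Rightarrow>\<^sub>0 'b::comm_monoid_add)"
  assumes "finite S" "Poly_Mapping.keys p \<subseteq> S"
  shows "p = (\<Sum>k\<in>S. Poly_Mapping.single k (Poly_Mapping.lookup p k))"
proof (rule poly_mapping_eqI)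
  fix m
  have "Poly_Mapping.lookup (\<Sum>k\<in>S. Poly_Mapping.single k (Poly_Mapping.lookup p k)) m
      = (\<Sum>k\<in>S. if k = m then Poly_Mapping.lookup p k else 0)"
    by (simp add: lookup_sum lookup_single when_def)
  also have "\<dots> = (if m \<in> S then Poly_Mapping.lookup p m else 0)"
    using assms(1) by (simp add: sum.delta')
  also have "\<dots> = Poly_Mapping.lookup p m"
    using assms(2) by (auto simp: in_keys_iff)
  finally show "Poly_Mapping.lookup p m = Poly_Mapping.lookup (\<Sum>k\<in>S. Poly_Mapping.single k (Poly_Mapping.lookup p k)) m"
    by simp
qed

lemma pm_sum_single:
  fixes p :: "('a \<Rightarrow>\<^sub>0 'b::comm_monoid_add)"
  shows "p = (\<Sum>k\<in>Poly_Mapping.keys p. Poly_Mapping.single k (Poly_Mapping.lookup p k))"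
  by (rule pm_sum_single_superset) auto

lemma keys_diff_sub: "Poly_Mapping.keys (p - q) \<subseteq> Poly_Mapping.keys p \<union> Poly_Mapping.keys (q::mpoly)"
  by (auto simp: in_keys_iff lookup_minus)

lemma keys_uminus_eq: "Poly_Mapping.keys (- p) = Poly_Mapping.keys (p::mpoly)"
  by (auto simp: in_keys_iff)

definition homog :: "((var \<Rightarrow>\<^sub>0 nat) \<Rightarrow> nat) \<Rightarrow> nat \<Rightarrow> mpoly \<Rightarrow> bool" where
  "homog \<delta> d p \<longleftrightarrow> (\<forall>m\<in>Poly_Mapping.keys p. \<delta> m = d)"

definition additive :: "((var \<Rightarrow>\<^sub>0 nat) \<Rightarrow> nat) \<Rightarrow> bool" where
  "additive \<delta> \<longleftrightarrow> (\<forall>m n. \<delta> (m + n) = \<delta> m + \<delta> n)"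

lemma homog_0 [simp]: "homog \<delta> d 0"
  by (simp add: homog_def)

lemma homog_add: "homog \<delta> d p \<Longrightarrow> homog \<delta> d q \<Longrightarrow> homog \<delta> d (p + q)"
  unfolding homog_def using keys_add[of p q] by auto

lemma homog_uminus: "homog \<delta> d p \<Longrightarrow> homog \<delta> d (- p)"
  unfolding homog_def by (simp add: keys_uminus_eq)

lemma homog_diff: "homog \<delta> d p \<Longrightarrow> homog \<delta> d q \<Longrightarrow> homog \<delta> d (p - q)"
  unfolding homog_def using keys_diff_sub[of p q] by auto

lemma homog_sum: "(\<And>x. x \<in> A \<Longrightarrow> homog \<delta> d (f x)) \<Longrightarrow> homog \<delta> d (sum f A)"
  by (induction A rule: infinite_finite_induct) (auto intro: homog_add)

lemma homog_single: "homog \<delta> (\<delta> m) (Poly_Mapping.single m c)"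
  by (simp add: homog_def)

lemma homog_mult:
  assumes "additive \<delta>" "homog \<delta> d p" "homog \<delta> e q"
  shows "homog \<delta> (d + e) (p * q)"
  unfolding homog_def
proof
  fix m assume "m \<in> Poly_Mapping.keys (p * q)"
  then obtain a b where "m = a + b" "a \<in> Poly_Mapping.keys p" "b \<in> Poly_Mapping.keys q"
    using keys_mult by blast
  then show "\<delta> m = d + e" using assms unfolding homog_def additive_def by auto
qed

lemma homog_const: "additive \<delta> \<Longrightarrow> homog \<delta> 0 (const c)"
proof -
  assume a: "additive \<delta>"
  have "\<delta> 0 = 0" using a unfolding additive_def by (metis add_0 add_cancel_right_left)
  then show ?thesis unfolding homog_def const_def by simp
qed

lemma homog_const_mult: "additive \<delta> \<Longrightarrow> homog \<delta> d p \<Longrightarrow> homog \<delta> d (const c * p)"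
  using homog_mult[of \<delta> 0 "const c" d p] homog_const by simp

lemma homog_power: "additive \<delta> \<Longrightarrow> homog \<delta> d p \<Longrightarrow> homog \<delta> (k * d) (p ^ k)"
proof (induction k)
  case 0
  then show ?case using homog_const[of \<delta> 1] by simp
next
  case (Suc k)
  then show ?case using homog_mult[of \<delta> d p "k*d" "p^k"] by (simp add: add.commute)
qed

definition comp :: "((var \<Rightarrow>\<^sub>0 nat) \<Rightarrow> nat) \<Rightarrow> nat \<Rightarrow> mpoly \<Rightarrow> mpoly" where
  "comp \<delta> d p = Abs_poly_mapping (\<lambda>m. if \<delta> m = d then Poly_Mapping.lookup p m else 0)"

lemma lookup_comp: "Poly_Mapping.lookup (comp \<delta> d p) m = (if \<delta> m = d then Poly_Mapping.lookup p m else 0)"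
proof -
  have "{m. (if \<delta> m = d then Poly_Mapping.lookup p m else 0) \<noteq> 0} \<subseteq> Poly_Mapping.keys p"
    by (auto simp: in_keys_iff split: if_splits)
  then have "finite {m. (if \<delta> m = d then Poly_Mapping.lookup p m else 0) \<noteq> 0}"
    using finite_subset finite_keys by blast
  then show ?thesis unfolding comp_def by simp
qed

lemma keys_comp: "Poly_Mapping.keys (comp \<delta> d p) \<subseteq> Poly_Mapping.keys p"
  by (auto simp: in_keys_iff lookup_comp split: if_splits)

lemma comp_add: "comp \<delta> d (p + q) = comp \<delta> d p + comp \<delta> d q"
  by (rule poly_mapping_eqI) (simp add: lookup_comp lookup_add)

lemma comp_uminus: "comp \<delta> d (- p) = - comp \<delta> d p"
  by (rule poly_mapping_eqI) (simp add: lookup_comp)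

lemma comp_diff: "comp \<delta> d (p - q) = comp \<delta> d p - comp \<delta> d q"
  by (rule poly_mapping_eqI) (simp add: lookup_comp lookup_minus)

lemma comp_0 [simp]: "comp \<delta> d 0 = 0"
  by (rule poly_mapping_eqI) (simp add: lookup_comp)

lemma comp_sum: "comp \<delta> d (sum f A) = (\<Sum>x\<in>A. comp \<delta> d (f x))"
  by (induction A rule: infinite_finite_induct) (simp_all add: comp_add)

lemma homog_comp: "homog \<delta> d (comp \<delta> d p)"
  by (auto simp: homog_def in_keys_iff lookup_comp split: if_splits)

lemma comp_self: "homog \<delta> d p \<Longrightarrow> comp \<delta> d p = p"
  by (rule poly_mapping_eqI) (auto simp: lookup_comp homog_def in_keys_iff)

lemma comp_other: "homog \<delta> e p \<Longrightarrow> e \<noteq> d \<Longrightarrow> comp \<delta> d p = 0"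
  by (rule poly_mapping_eqI) (auto simp: lookup_comp homog_def in_keys_iff)

lemma comp_decomp:
  assumes "finite D" "\<delta> ` Poly_Mapping.keys p \<subseteq> D"
  shows "p = (\<Sum>d\<in>D. comp \<delta> d p)"
proof (rule poly_mapping_eqI)
  fix m
  have "Poly_Mapping.lookup (\<Sum>d\<in>D. comp \<delta> d p) m = (\<Sum>d\<in>D. if \<delta> m = d then Poly_Mapping.lookup p m else 0)"
    by (simp add: lookup_sum lookup_comp)
  also have "\<dots> = (if \<delta> m \<in> D then Poly_Mapping.lookup p m else 0)"
    using assms(1) by (simp add: sum.delta)
  also have "\<dots> = Poly_Mapping.lookup p m"
    using assms(2) by (auto simp: in_keys_iff image_subset_iff)
  finally show "Poly_Mapping.lookup p m = Poly_Mapping.lookup (\<Sum>d\<in>D. comp \<delta> d p) m" by simp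
qed

lemma comp_empty_degree:
  assumes "d \<notin> \<delta> ` Poly_Mapping.keys p"
  shows "comp \<delta> d p = 0"
  by (rule poly_mapping_eqI) (use assms in \<open>auto simp: lookup_comp in_keys_iff\<close>)

lemma comp_mult:
  assumes add: "additive \<delta>" and f: "homog \<delta> e f"
  shows "comp \<delta> d (a * f) = (if e \<le> d then comp \<delta> (d - e) a * f else 0)"
proof -
  define D where "D = \<delta> ` Poly_Mapping.keys a"
  have fin: "finite D" unfolding D_def by simp
  have "a = (\<Sum>k\<in>D. comp \<delta> k a)" using comp_decomp[OF fin] D_def by blast
  then have "a * f = (\<Sum>k\<in>D. comp \<delta> k a * f)"
    by (metis sum_distrib_right)
  then have "comp \<delta> d (a * f) = (\<Sum>k\<in>D. comp \<delta> d (comp \<delta> k a * f))"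
    by (simp add: comp_sum)
  also have "\<dots> = (\<Sum>k\<in>D. if k + e = d then comp \<delta> k a * f else 0)"
  proof (rule sum.cong)
    fix k assume "k \<in> D"
    have h: "homog \<delta> (k + e) (comp \<delta> k a * f)"
      using homog_mult[OF add homog_comp f] .
    show "comp \<delta> d (comp \<delta> k a * f) = (if k + e = d then comp \<delta> k a * f else 0)"
      using comp_self[OF h] comp_other[OF h] by auto
  qed simp
  also have "\<dots> = (if e \<le> d then comp \<delta> (d - e) a * f else 0)"
  proof (cases "e \<le> d")
    case True
    have "(\<Sum>k\<in>D. if k + e = d then comp \<delta> k a * f else 0) = (\<Sum>k\<in>D. if k = d - e then comp \<delta> k a * f else 0)"
      by (rule sum.cong) (use True in auto)
    also have "\<dots> = (if d - e \<in> D then comp \<delta> (d - e) a * f else 0)"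
      using fin by (simp add: sum.delta')
    also have "\<dots> = comp \<delta> (d - e) a * f"
      using comp_empty_degree[of "d - e" \<delta> a] D_def by auto
    finally show ?thesis using True by simp
  next
    case False
    then show ?thesis by (auto intro!: sum.neutral)
  qed
  finally show ?thesis .
qed

lemma additive_wdeg: "additive wdeg"
  by (simp add: additive_def wdeg_add)

definition ydeg :: "(var \<Rightarrow>\<^sub>0 nat) \<Rightarrow> nat" where
  "ydeg m = Poly_Mapping.lookup m Y"

lemma additive_ydeg: "additive ydeg"
  by (simp add: additive_def ydeg_def lookup_add)

lemma homogeneous_homog: "homogeneous d p = homog wdeg d p"
  by (simp add: homogeneous_def homog_def)

lemma y_free_homog: "y_free p = homog ydeg 0 p"
  by (simp add: y_free_def homog_def ydeg_def)

abbreviation hc where "hc \<equiv> comp wdeg"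

lemma homog_pvar:
  "homog wdeg 1 (pvar X1)" "homog wdeg 1 (pvar X2)" "homog wdeg 1 (pvar X3)" "homog wdeg 2 (pvar Y)"
  "homog ydeg 0 (pvar X1)" "homog ydeg 0 (pvar X2)" "homog ydeg 0 (pvar X3)" "homog ydeg 1 (pvar Y)"
  by (simp_all add: pvar_mk homog_def ydeg_def)

lemma lookup_mult_single_shift:
  fixes p :: mpoly
  shows "Poly_Mapping.lookup (p * Poly_Mapping.single n c) (m + n) = Poly_Mapping.lookup p m * (c::complex)"
proof -
  have "p * Poly_Mapping.single n c = (\<Sum>k\<in>Poly_Mapping.keys p. Poly_Mapping.single k (Poly_Mapping.lookup p k)) * Poly_Mapping.single n c"
    using pm_sum_single by metis
  also have "\<dots> = (\<Sum>k\<in>Poly_Mapping.keys p. Poly_Mapping.single (k + n) (Poly_Mapping.lookup p k * c))"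
    by (simp add: sum_distrib_right mult_single)
  finally have "Poly_Mapping.lookup (p * Poly_Mapping.single n c) (m + n) =
     (\<Sum>k\<in>Poly_Mapping.keys p. if k = m then Poly_Mapping.lookup p k * c else 0)"
    by (simp add: lookup_sum lookup_single when_def)
  also have "\<dots> = Poly_Mapping.lookup p m * c"
    by (simp add: sum.delta' in_keys_iff)
  finally show ?thesis .
qed

lemma mult_single_cancel:
  fixes p :: mpoly
  assumes "p * Poly_Mapping.single n (1::complex) = 0"
  shows "p = 0"
proof (rule poly_mapping_eqI)
  fix m
  have "Poly_Mapping.lookup (p * Poly_Mapping.single n 1) (m + n) = 0" using assms by simp
  then show "Poly_Mapping.lookup p m = Poly_Mapping.lookup 0 m"
    by (simp add: lookup_mult_single_shift)
qed

lemma pvar_Y_power: "pvar Y ^ k = Poly_Mapping.single (mk 0 0 0 k) 1"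
  by (induction k) (simp_all add: pvar_mk mult_single)

lemma ysep:
  assumes "y_free A" "y_free B" "y_free C" "A + B * pvar Y + C * pvar Y ^ 2 = 0"
  shows "A = 0 \<and> B = 0 \<and> C = 0"
proof -
  have hA: "homog ydeg 0 A" using assms by (simp add: y_free_homog)
  have "homog ydeg (0 + 1) (B * pvar Y)"
    by (rule homog_mult[OF additive_ydeg _ homog_pvar(8)]) (use assms in \<open>simp add: y_free_homog\<close>)
  then have hB: "homog ydeg 1 (B * pvar Y)" by simp
  have "homog ydeg (2 * 1) (pvar Y ^ 2)" by (rule homog_power[OF additive_ydeg homog_pvar(8)])
  then have "homog ydeg (0 + 2) (C * pvar Y ^ 2)"
    by (intro homog_mult[OF additive_ydeg]) (use assms in \<open>simp_all add: y_free_homog\<close>)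
  then have hC: "homog ydeg 2 (C * pvar Y ^ 2)" by (simp only: add_0_left)
  have "comp ydeg 0 (A + B * pvar Y + C * pvar Y ^ 2) = A"
    using comp_self[OF hA] comp_other[OF hB] comp_other[OF hC] by (simp add: comp_add)
  moreover have "comp ydeg 1 (A + B * pvar Y + C * pvar Y ^ 2) = B * pvar Y"
    using comp_other[OF hA] comp_self[OF hB] comp_other[OF hC] by (simp add: comp_add)
  moreover have "comp ydeg 2 (A + B * pvar Y + C * pvar Y ^ 2) = C * pvar Y ^ 2"
    using comp_other[OF hA] comp_other[OF hB] comp_self[OF hC] by (simp add: comp_add)
  ultimately have "A = 0" "B * pvar Y = 0" "C * pvar Y ^ 2 = 0" using assms(4) by simp_all
  moreover have "pvar Y ^ 2 = Poly_Mapping.single (mk 0 0 0 2) 1"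
    by (rule pvar_Y_power)
  ultimately show ?thesis using mult_single_cancel
    by (metis pvar_def)
qed


lemma pderiv_superset:
  assumes "finite S" "Poly_Mapping.keys p \<subseteq> S"
  shows "pderiv_var v p = (\<Sum>m\<in>S. Poly_Mapping.single (m - Poly_Mapping.single v 1) (Poly_Mapping.lookup p m * of_nat (Poly_Mapping.lookup m v)))"
  unfolding pderiv_var_def
  by (rule sum.mono_neutral_left) (use assms in \<open>auto simp: in_keys_iff\<close>)

lemma pderiv_add: "pderiv_var v (p + q) = pderiv_var v p + pderiv_var v q"
proof -
  let ?S = "Poly_Mapping.keys p \<union> Poly_Mapping.keys q"
  have "pderiv_var v (p + q) = (\<Sum>m\<in>?S. Poly_Mapping.single (m - Poly_Mapping.single v 1) (Poly_Mapping.lookup (p+q) m * of_nat (Poly_Mapping.lookup m v)))"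
    by (rule pderiv_superset) (auto simp: keys_add)
  also have "\<dots> = (\<Sum>m\<in>?S. Poly_Mapping.single (m - Poly_Mapping.single v 1) (Poly_Mapping.lookup p m * of_nat (Poly_Mapping.lookup m v)))
       + (\<Sum>m\<in>?S. Poly_Mapping.single (m - Poly_Mapping.single v 1) (Poly_Mapping.lookup q m * of_nat (Poly_Mapping.lookup m v)))"
    by (simp add: lookup_add distrib_right single_add sum.distrib)
  also have "\<dots> = pderiv_var v p + pderiv_var v q"
    by (subst (1 2) pderiv_superset[where S = ?S]) auto
  finally show ?thesis .
qed

lemma pderiv_0 [simp]: "pderiv_var v 0 = 0"
  by (simp add: pderiv_var_def)

lemma pderiv_sum: "pderiv_var v (sum f A) = (\<Sum>x\<in>A. pderiv_var v (f x))"
  by (induction A rule: infinite_finite_induct) (simp_all add: pderiv_add)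

lemma pderiv_single: "pderiv_var v (Poly_Mapping.single m c) = Poly_Mapping.single (m - Poly_Mapping.single v 1) (c * of_nat (Poly_Mapping.lookup m v))"
  by (subst pderiv_superset[where S = "{m}"]) auto

lemma mk_minus [simp]: "mk a b c d - mk a' b' c' d' = mk (a - a') (b - b') (c - c') (d - d')"
  by (rule pm_var_eqI) (simp_all add: lookup_minus)

lemma pderiv_homog:
  assumes "homogeneous d p"
  shows "homogeneous (d - wdeg (Poly_Mapping.single v 1)) (pderiv_var v p)"
  unfolding pderiv_var_def homogeneous_homog
proof (rule homog_sum)
  fix m assume m: "m \<in> Poly_Mapping.keys p"
  then have wd: "wdeg m = d" using assms by (simp add: homogeneous_def)
  show "homog wdeg (d - wdeg (Poly_Mapping.single v 1)) (Poly_Mapping.single (m - Poly_Mapping.single v 1)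
          (Poly_Mapping.lookup p m * of_nat (Poly_Mapping.lookup m v)))"
  proof (cases "Poly_Mapping.lookup m v = 0")
    case True then show ?thesis by simp
  next
    case False
    have "wdeg (m - Poly_Mapping.single v 1) = wdeg m - wdeg (Poly_Mapping.single v 1)"
      using False by (cases v) (simp_all add: wdeg_def lookup_minus lookup_single)
    then show ?thesis using wd homog_single by metis
  qed
qed

definition FF :: "mpoly \<Rightarrow> mpoly \<Rightarrow> mpoly" where
  "FF g h = pvar Y ^ 3 + g * pvar Y + h"


lemma pderiv_Y_yfree:
  assumes "y_free g"
  shows "pderiv_var Y g = 0"
  unfolding pderiv_var_def using assms by (auto simp: y_free_def intro!: sum.neutral)

lemma pderiv_Y_times_Y:
  assumes "y_free g"
  shows "pderiv_var Y (g * pvar Y) = g"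
proof -
  have "g * pvar Y = (\<Sum>k\<in>Poly_Mapping.keys g. Poly_Mapping.single k (Poly_Mapping.lookup g k)) * pvar Y"
    using pm_sum_single by metis
  also have "\<dots> = (\<Sum>k\<in>Poly_Mapping.keys g. Poly_Mapping.single (k + mk 0 0 0 1) (Poly_Mapping.lookup g k))"
    by (simp add: sum_distrib_right pvar_mk mult_single)
  finally have "pderiv_var Y (g * pvar Y) = (\<Sum>k\<in>Poly_Mapping.keys g. pderiv_var Y (Poly_Mapping.single (k + mk 0 0 0 1) (Poly_Mapping.lookup g k)))"
    by (simp add: pderiv_sum)
  also have "\<dots> = (\<Sum>k\<in>Poly_Mapping.keys g. Poly_Mapping.single k (Poly_Mapping.lookup g k))"
  proof (rule sum.cong)
    fix k assume "k \<in> Poly_Mapping.keys g"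
    then have "Poly_Mapping.lookup k Y = 0" using assms by (simp add: y_free_def)
    then show "pderiv_var Y (Poly_Mapping.single (k + mk 0 0 0 1) (Poly_Mapping.lookup g k)) = Poly_Mapping.single k (Poly_Mapping.lookup g k)"
      by (simp add: pderiv_single lookup_add single_var_mk)
  qed simp
  also have "\<dots> = g" using pm_sum_single by metis
  finally show ?thesis .
qed

lemma pderiv_Y_FF:
  assumes "y_free g" "y_free h"
  shows "pderiv_var Y (FF g h) = const 3 * pvar Y ^ 2 + g"
proof -
  have e: "mk 0 0 0 3 - Poly_Mapping.single Y 1 = mk 0 0 0 2"
    by (rule pm_var_eqI) (simp_all add: lookup_minus lookup_single)
  have "pderiv_var Y (pvar Y ^ 3) = const 3 * pvar Y ^ 2"
    unfolding pvar_Y_power pderiv_single e by (simp add: const_single)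
  then show ?thesis using assms
    by (simp add: FF_def pderiv_add pderiv_Y_times_Y pderiv_Y_yfree)
qed

lemma homog_FF:
  assumes "homogeneous 4 g" "homogeneous 6 h"
  shows "homogeneous 6 (FF g h)"
  unfolding FF_def homogeneous_homog
  using assms homog_power[OF additive_wdeg homog_pvar(4), of 3]
    homog_mult[OF additive_wdeg, of 4 g 2 "pvar Y"] homog_pvar(4)
  by (intro homog_add) (simp_all add: homogeneous_homog)

lemma homog_pderiv_FF:
  assumes "homogeneous 4 g" "homogeneous 6 h"
  shows "homogeneous 5 (pderiv_var X1 (FF g h))" "homogeneous 5 (pderiv_var X2 (FF g h))"
    "homogeneous 5 (pderiv_var X3 (FF g h))" "homogeneous 4 (pderiv_var Y (FF g h))"
  using pderiv_homog[OF homog_FF[OF assms], of X1] pderiv_homog[OF homog_FF[OF assms], of X2]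
    pderiv_homog[OF homog_FF[OF assms], of X3] pderiv_homog[OF homog_FF[OF assms], of Y]
  by (simp_all add: single_var_mk)

section \<open>The Jacobian ideal\<close>

definition lincomb :: "mpoly \<Rightarrow> (var \<Rightarrow> mpoly) \<Rightarrow> mpoly" where
  "lincomb F a = a X1 * pderiv_var X1 F + a X2 * pderiv_var X2 F + a X3 * pderiv_var X3 F + a Y * pderiv_var Y F"

lemma a_inv_mpoly [simp]: "a_inv mpoly_ring x = - x"
proof -
  interpret ring mpoly_ring by (rule ring_mpoly)
  have "a_inv mpoly_ring x + x = 0" using l_neg[of x] by simp
  then show ?thesis by (simp add: eq_neg_iff_add_eq_0 add.commute)
qed

lemma ideal_lincomb: "ideal (range (lincomb F)) mpoly_ring"
proof (rule idealI[OF ring_mpoly])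
  interpret ring mpoly_ring by (rule ring_mpoly)
  have neg: "- lincomb F c = lincomb F (\<lambda>v. - c v)" for c by (simp add: lincomb_def algebra_simps)
  have sm: "lincomb F c + lincomb F d = lincomb F (\<lambda>v. c v + d v)" for c d by (simp add: lincomb_def algebra_simps)
  show "subgroup (range (lincomb F)) (add_monoid mpoly_ring)"
    by (rule add.subgroupI) (auto simp: neg sm)
next
  fix a x assume "a \<in> range (lincomb F)"
  then obtain c where c: "a = lincomb F c" by auto
  have "x * a = lincomb F (\<lambda>v. x * c v)" by (simp add: c lincomb_def algebra_simps)
  then show "x \<otimes>\<^bsub>mpoly_ring\<^esub> a \<in> range (lincomb F)" by simp
  have "a * x = lincomb F (\<lambda>v. x * c v)" by (simp add: c lincomb_def algebra_simps)
  then show "a \<otimes>\<^bsub>mpoly_ring\<^esub> x \<in> range (lincomb F)" by simp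
qed

lemma jac_ideal_eq: "jac_ideal F = range (lincomb F)"
proof
  interpret ring mpoly_ring by (rule ring_mpoly)
  show "jac_ideal F \<subseteq> range (lincomb F)"
    unfolding jac_ideal_def
  proof (rule genideal_minimal[OF ideal_lincomb])
    show "range (\<lambda>v. pderiv_var v F) \<subseteq> range (lincomb F)"
    proof
      fix p assume "p \<in> range (\<lambda>v. pderiv_var v F)"
      then obtain v where v: "p = pderiv_var v F" by auto
      have "p = lincomb F (\<lambda>w. if w = v then 1 else 0)"
        by (cases v) (simp_all add: v lincomb_def)
      then show "p \<in> range (lincomb F)" by simp
    qed
  qed
  show "range (lincomb F) \<subseteq> jac_ideal F"
  proof
    fix p assume "p \<in> range (lincomb F)"
    then obtain c where c: "p = lincomb F c" by auto
    have id: "ideal (jac_ideal F) mpoly_ring"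
      unfolding jac_ideal_def by (rule genideal_ideal) simp
    have gen: "pderiv_var v F \<in> jac_ideal F" for v
      unfolding jac_ideal_def using genideal_self[of "range (\<lambda>v. pderiv_var v F)"] by auto
    have m: "c v * pderiv_var v F \<in> jac_ideal F" for v
      using ideal.I_l_closed[OF id gen[of v], of "c v"] by simp
    have s: "a \<in> jac_ideal F \<Longrightarrow> b \<in> jac_ideal F \<Longrightarrow> a + b \<in> jac_ideal F" for a b
      using additive_subgroup.a_closed[OF ideal.axioms(1)[OF id]] by simp
    show "p \<in> jac_ideal F" unfolding c lincomb_def by (intro s m)
  qed
qed

lemma jac_ideal_ideal: "ideal (jac_ideal F) mpoly_ring"
  using jac_ideal_eq ideal_lincomb by metis

lemma jac_ideal_mem: "p \<in> jac_ideal F \<longleftrightarrow> (\<exists>c. p = lincomb F c)"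
  by (auto simp: jac_ideal_eq)

lemma jac_0 [simp]: "0 \<in> jac_ideal F"
  by (metis jac_ideal_ideal additive_subgroup.zero_closed ideal.axioms(1) mpoly_ring_simps(4))

lemma jac_add: "a \<in> jac_ideal F \<Longrightarrow> b \<in> jac_ideal F \<Longrightarrow> a + b \<in> jac_ideal F"
  using additive_subgroup.a_closed[OF ideal.axioms(1)[OF jac_ideal_ideal]] by simp

lemma jac_mult: "a \<in> jac_ideal F \<Longrightarrow> x * a \<in> jac_ideal F"
  using ideal.I_l_closed[OF jac_ideal_ideal] by fastforce

lemma jac_uminus: "a \<in> jac_ideal F \<Longrightarrow> - a \<in> jac_ideal F"
  using jac_mult[of a F "-1"] by simp

lemma jac_diff: "a \<in> jac_ideal F \<Longrightarrow> b \<in> jac_ideal F \<Longrightarrow> a - b \<in> jac_ideal F"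
  using jac_add[of a F "- b"] jac_uminus by simp

lemma jcoset_eq_iff: "jcoset F p = jcoset F q \<longleftrightarrow> p - q \<in> jac_ideal F"
proof -
  interpret ring mpoly_ring by (rule ring_mpoly)
  have "p \<ominus>\<^bsub>mpoly_ring\<^esub> q = p - q" by (simp add: a_minus_def)
  then show ?thesis
    using quotient_eq_iff_same_a_r_cos[OF jac_ideal_ideal, of p q] by (simp add: jcoset_def)
qed

lemma Jac_mult: "jcoset F p \<otimes>\<^bsub>Jac F\<^esub> jcoset F q = jcoset F (p * q)"
  using ideal.rcoset_mult_add[OF jac_ideal_ideal, of p q]
  by (simp add: Jac_def FactRing_def jcoset_def)

lemma Jac_add: "jcoset F p \<oplus>\<^bsub>Jac F\<^esub> jcoset F q = jcoset F (p + q)"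
  using ideal.a_rcos_sum[OF jac_ideal_ideal, of p q]
  by (simp add: Jac_def FactRing_def jcoset_def)

lemma Jac_one: "\<one>\<^bsub>Jac F\<^esub> = jcoset F 1"
  by (simp add: Jac_def FactRing_def jcoset_def)

lemma Jac_even_simps [simp]:
  "mult (Jac_even F) = mult (Jac F)" "add (Jac_even F) = add (Jac F)" "one (Jac_even F) = one (Jac F)"
  "carrier (Jac_even F) = {jcoset F p | p. even_poly p}"
  by (simp_all add: Jac_even_def)


lemma even_poly_homog: "homogeneous d p \<Longrightarrow> even d \<Longrightarrow> even_poly p"
  by (simp add: homogeneous_def even_poly_def)

lemma even_poly_0 [simp]: "even_poly 0"
  by (simp add: even_poly_def)

lemma even_poly_add: "even_poly p \<Longrightarrow> even_poly q \<Longrightarrow> even_poly (p + q)"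
  unfolding even_poly_def using keys_add[of p q] by auto

lemma even_poly_uminus: "even_poly p \<Longrightarrow> even_poly (- p)"
  unfolding even_poly_def by (simp add: keys_uminus_eq)

lemma even_poly_diff: "even_poly p \<Longrightarrow> even_poly q \<Longrightarrow> even_poly (p - q)"
  unfolding even_poly_def using keys_diff_sub[of p q] by auto

lemma even_poly_mult: "even_poly p \<Longrightarrow> even_poly q \<Longrightarrow> even_poly (p * q)"
  unfolding even_poly_def
proof
  fix m assume "\<forall>m\<in>Poly_Mapping.keys p. even (wdeg m)" "\<forall>m\<in>Poly_Mapping.keys q. even (wdeg m)"
    "m \<in> Poly_Mapping.keys (p * q)"
  then show "even (wdeg m)" using keys_mult[of p q] by (auto simp: wdeg_add)
qed

lemma even_poly_const [simp]: "even_poly (const c)"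
  by (simp add: even_poly_def const_def)

lemma even_poly_const_mult: "even_poly p \<Longrightarrow> even_poly (const c * p)"
  by (simp add: even_poly_mult)

lemma even_poly_sum: "(\<And>i. i \<in> A \<Longrightarrow> even_poly (f i)) \<Longrightarrow> even_poly (sum f A)"
  by (induction A rule: infinite_finite_induct) (auto intro: even_poly_add)

lemma even_poly_hc: "even_poly p \<Longrightarrow> even_poly (hc d p)"
  unfolding even_poly_def using keys_comp[of wdeg d p] by auto

lemma homog0_const: "homogeneous 0 q \<Longrightarrow> q = const (Poly_Mapping.lookup q 0)"
proof (rule poly_mapping_eqI)
  fix m assume h: "homogeneous 0 q"
  show "Poly_Mapping.lookup q m = Poly_Mapping.lookup (const (Poly_Mapping.lookup q 0)) m"
  proof (cases "m = 0")
    case True then show ?thesis by (simp add: lookup_const)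
  next
    case False
    have "wdeg m \<noteq> 0"
    proof
      assume "wdeg m = 0"
      then have "m = mk 0 0 0 0" by (subst mk_expand) (simp add: wdeg_def)
      then show False using False by simp
    qed
    then have "m \<notin> Poly_Mapping.keys q" using h by (auto simp: homogeneous_def)
    then show ?thesis using False by (simp add: lookup_const in_keys_iff)
  qed
qed

section \<open>Homogeneous pieces of the Jacobian ideal\<close>

definition ev :: "var \<Rightarrow> nat" where "ev v = (if v = Y then 4 else 5)"

lemma hc_lincomb:
  assumes "homogeneous 4 g" "homogeneous 6 h"
  shows "hc d (lincomb (FF g h) c) = lincomb (FF g h) (\<lambda>v. if ev v \<le> d then hc (d - ev v) (c v) else 0)"
  using homog_pderiv_FF[OF assms]
  unfolding lincomb_def homogeneous_homog
  by (simp add: comp_add comp_mult[OF additive_wdeg] ev_def)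

lemma jac_hc:
  assumes "homogeneous 4 g" "homogeneous 6 h" "p \<in> jac_ideal (FF g h)"
  shows "hc d p \<in> jac_ideal (FF g h)"
  using assms hc_lincomb[OF assms(1,2)] by (auto simp: jac_ideal_mem)

lemma jac_low:
  assumes "homogeneous 4 g" "homogeneous 6 h" "p \<in> jac_ideal (FF g h)" "homogeneous d p" "d < 4"
  shows "p = 0"
proof -
  obtain c where c: "p = lincomb (FF g h) c" using assms(3) by (auto simp: jac_ideal_mem)
  have "p = hc d p" using comp_self assms(4) by (simp add: homogeneous_homog)
  also have "\<dots> = 0" using hc_lincomb[OF assms(1,2), of d c] assms(5) c by (simp add: lincomb_def ev_def)
  finally show ?thesis .
qed

lemma jac_4:
  assumes "homogeneous 4 g" "homogeneous 6 h" "y_free g" "y_free h"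
    "p \<in> jac_ideal (FF g h)" "homogeneous 4 p"
  shows "\<exists>lam. p = const lam * (const 3 * pvar Y ^ 2 + g)"
proof -
  obtain c where c: "p = lincomb (FF g h) c" using assms(5) by (auto simp: jac_ideal_mem)
  have "p = hc 4 p" using comp_self assms(6) by (simp add: homogeneous_homog)
  also have "\<dots> = hc 0 (c Y) * pderiv_var Y (FF g h)"
    using hc_lincomb[OF assms(1,2), of 4 c] c by (simp add: lincomb_def ev_def)
  also have "hc 0 (c Y) = const (Poly_Mapping.lookup (hc 0 (c Y)) 0)"
    by (rule homog0_const) (simp add: homogeneous_homog homog_comp)
  finally show ?thesis using pderiv_Y_FF[OF assms(3,4)] by metis
qed


section \<open>Degree 2 monomials\<close>

datatype m2 = Z11 | Z22 | Z33 | Z12 | Z13 | Z23 | W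

lemma UNIV_m2: "(UNIV :: m2 set) = {Z11, Z22, Z33, Z12, Z13, Z23, W}"
  using m2.exhaust by auto

lemma finite_m2 [simp]: "finite (A :: m2 set)"
  using UNIV_m2 finite_subset by (metis finite.emptyI finite_insert subset_UNIV)

lemma sum_m2: "(\<Sum>u\<in>UNIV. f u) = f Z11 + f Z22 + f Z33 + f Z12 + f Z13 + f Z23 + (f W :: 'a::comm_monoid_add)"
  by (simp add: UNIV_m2 add.assoc)

fun mexp :: "m2 \<Rightarrow> (var \<Rightarrow>\<^sub>0 nat)" where
  "mexp Z11 = mk 2 0 0 0" | "mexp Z22 = mk 0 2 0 0" | "mexp Z33 = mk 0 0 2 0"
| "mexp Z12 = mk 1 1 0 0" | "mexp Z13 = mk 1 0 1 0" | "mexp Z23 = mk 0 1 1 0" | "mexp W = mk 0 0 0 1"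

definition mon :: "m2 \<Rightarrow> mpoly" where "mon u = Poly_Mapping.single (mexp u) 1"

lemma inj_mexp: "inj mexp"
  unfolding inj_def by (intro allI; case_tac x; case_tac y; simp)

lemma mexp_eq_iff [simp]: "mexp u = mexp v \<longleftrightarrow> u = v"
  using inj_mexp by (auto dest: injD)

lemma wdeg2_cases:
  assumes "wdeg m = 2" shows "m \<in> range mexp"
proof -
  let ?a = "Poly_Mapping.lookup m X1" and ?b = "Poly_Mapping.lookup m X2"
    and ?c = "Poly_Mapping.lookup m X3" and ?d = "Poly_Mapping.lookup m Y"
  have e: "?a + ?b + ?c + 2 * ?d = 2" using assms by (simp add: wdeg_def)
  have "(?a = 2 \<and> ?b = 0 \<and> ?c = 0 \<and> ?d = 0) \<or> (?a = 0 \<and> ?b = 2 \<and> ?c = 0 \<and> ?d = 0) \<or>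
        (?a = 0 \<and> ?b = 0 \<and> ?c = 2 \<and> ?d = 0) \<or> (?a = 1 \<and> ?b = 1 \<and> ?c = 0 \<and> ?d = 0) \<or>
        (?a = 1 \<and> ?b = 0 \<and> ?c = 1 \<and> ?d = 0) \<or> (?a = 0 \<and> ?b = 1 \<and> ?c = 1 \<and> ?d = 0) \<or>
        (?a = 0 \<and> ?b = 0 \<and> ?c = 0 \<and> ?d = 1)"
    using e by presburger
  moreover have "range mexp = {mk 2 0 0 0, mk 0 2 0 0, mk 0 0 2 0, mk 1 1 0 0, mk 1 0 1 0, mk 0 1 1 0, mk 0 0 0 1}"
    by (simp add: UNIV_m2)
  ultimately show ?thesis
    by (subst mk_expand) auto
qed

definition coef :: "mpoly \<Rightarrow> m2 \<Rightarrow> complex" where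
  "coef q b = Poly_Mapping.lookup q (mexp b)"

lemma hom2_expand:
  assumes "homogeneous 2 q"
  shows "q = (\<Sum>b\<in>UNIV. const (coef q b) * mon b)"
proof -
  have "q = (\<Sum>k\<in>range mexp. Poly_Mapping.single k (Poly_Mapping.lookup q k))"
    by (rule pm_sum_single_superset) (use assms wdeg2_cases in \<open>auto simp: homogeneous_def\<close>)
  also have "\<dots> = (\<Sum>b\<in>UNIV. Poly_Mapping.single (mexp b) (Poly_Mapping.lookup q (mexp b)))"
    by (simp add: sum.reindex[OF inj_mexp])
  also have "\<dots> = (\<Sum>b\<in>UNIV. const (coef q b) * mon b)"
    by (simp add: coef_def mon_def const_single)
  finally show ?thesis .
qed

lemma homog_mon: "homogeneous 2 (mon u)"
  by (cases u) (simp_all add: mon_def homogeneous_def)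

lemma even_mon: "even_poly (mon u)"
  using even_poly_homog[OF homog_mon] by simp

lemma homog_lin2: "homogeneous 2 (\<Sum>b\<in>UNIV. const (t b) * mon b)"
  unfolding homogeneous_homog
  by (intro homog_sum homog_const_mult[OF additive_wdeg]) (simp add: homog_mon[unfolded homogeneous_homog])

lemma lookup_lin2: "Poly_Mapping.lookup (\<Sum>b\<in>UNIV. const (t b) * mon b) (mexp b') = t b'"
proof -
  have "Poly_Mapping.lookup (\<Sum>b\<in>UNIV. const (t b) * mon b) (mexp b') = (\<Sum>b\<in>UNIV. if b = b' then t b else 0)"
    by (simp add: lookup_sum mon_def const_single lookup_single when_def)
  then show ?thesis by simp
qed

lemma coef_lin2 [simp]: "coef (\<Sum>b\<in>UNIV. const (t b) * mon b) b' = t b'"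
  by (simp add: coef_def lookup_lin2)

lemma lin2_zero: "(\<Sum>b\<in>UNIV. const (t b) * mon b) = 0 \<Longrightarrow> t b = 0"
  using coef_lin2[of t b] by (simp add: coef_def)

lemma pvar_X_power:
  "pvar X1 ^ k = Poly_Mapping.single (mk k 0 0 0) 1" "pvar X2 ^ k = Poly_Mapping.single (mk 0 k 0 0) 1"
  "pvar X3 ^ k = Poly_Mapping.single (mk 0 0 k 0) 1"
  by (induction k) (simp_all add: pvar_mk mult_single)

lemma mon_simps:
  "mon Z11 = pvar X1 ^ 2" "mon Z22 = pvar X2 ^ 2" "mon Z33 = pvar X3 ^ 2"
  "mon Z12 = pvar X1 * pvar X2" "mon Z13 = pvar X1 * pvar X3" "mon Z23 = pvar X2 * pvar X3"
  "mon W = pvar Y"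
  by (simp_all only: mon_def pvar_X_power mexp.simps) (simp_all add: pvar_mk mult_single)


locale ctx =
  fixes g h g' h' :: mpoly and \<phi> :: "mpoly set \<Rightarrow> mpoly set"
  assumes yg: "y_free g" and hg: "homogeneous 4 g" and yh: "y_free h" and hh: "homogeneous 6 h"
    and yg': "y_free g'" and hg': "homogeneous 4 g'" and yh': "y_free h'" and hh': "homogeneous 6 h'"
    and iso: "graded_alg_iso_even (FF g h) (FF g' h') \<phi>"
begin

abbreviation "F \<equiv> FF g h"
abbreviation "F' \<equiv> FF g' h'"

lemma ring_iso: "\<phi> \<in> ring_iso (Jac_even F) (Jac_even F')"
  using iso by (simp add: graded_alg_iso_even_def)

lemma carr: "jcoset F p \<in> carrier (Jac_even F) \<longleftrightarrow> (\<exists>q. even_poly q \<and> jcoset F p = jcoset F q)"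
  by auto

lemma phi_carrier:
  assumes "even_poly p" shows "\<exists>p'. even_poly p' \<and> \<phi> (jcoset F p) = jcoset F' p'"
proof -
  have "jcoset F p \<in> carrier (Jac_even F)" using assms by auto
  then have "\<phi> (jcoset F p) \<in> carrier (Jac_even F')" using ring_iso_memE(1)[OF ring_iso] by blast
  then show ?thesis by auto
qed

lemma phi_add:
  assumes "even_poly p" "even_poly q" "\<phi> (jcoset F p) = jcoset F' p'" "\<phi> (jcoset F q) = jcoset F' q'"
  shows "\<phi> (jcoset F (p + q)) = jcoset F' (p' + q')"
proof -
  have c: "jcoset F p \<in> carrier (Jac_even F)" "jcoset F q \<in> carrier (Jac_even F)" using assms by auto
  have "\<phi> (jcoset F p \<oplus>\<^bsub>Jac_even F\<^esub> jcoset F q) = \<phi> (jcoset F p) \<oplus>\<^bsub>Jac_even F'\<^esub> \<phi> (jcoset F q)"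
    using ring_iso_memE(3)[OF ring_iso c] .
  then show ?thesis using assms by (simp add: Jac_add)
qed

lemma phi_mult:
  assumes "even_poly p" "even_poly q" "\<phi> (jcoset F p) = jcoset F' p'" "\<phi> (jcoset F q) = jcoset F' q'"
  shows "\<phi> (jcoset F (p * q)) = jcoset F' (p' * q')"
proof -
  have c: "jcoset F p \<in> carrier (Jac_even F)" "jcoset F q \<in> carrier (Jac_even F)" using assms by auto
  have "\<phi> (jcoset F p \<otimes>\<^bsub>Jac_even F\<^esub> jcoset F q) = \<phi> (jcoset F p) \<otimes>\<^bsub>Jac_even F'\<^esub> \<phi> (jcoset F q)"
    using ring_iso_memE(2)[OF ring_iso c] .
  then show ?thesis using assms by (simp add: Jac_mult)
qed

lemma phi_one: "\<phi> (jcoset F 1) = jcoset F' 1"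
  using ring_iso_memE(4)[OF ring_iso] by (simp add: Jac_one)

lemma phi_smult:
  assumes "even_poly p" "\<phi> (jcoset F p) = jcoset F' p'"
  shows "\<phi> (jcoset F (const c * p)) = jcoset F' (const c * p')"
  using iso assms by (simp add: graded_alg_iso_even_def Jac_mult)

lemma phi_zero: "\<phi> (jcoset F 0) = jcoset F' 0"
  using phi_smult[of 1 1 0] phi_one even_poly_const[of 1] by simp

lemma phi_sum:
  assumes "finite A" "\<And>i. i \<in> A \<Longrightarrow> even_poly (p i) \<and> \<phi> (jcoset F (p i)) = jcoset F' (r i)"
  shows "\<phi> (jcoset F (sum p A)) = jcoset F' (sum r A)"
  using assms
proof (induction A rule: finite_induct)
  case empty then show ?case using phi_zero by simp
next
  case (insert x A)
  then show ?case
    by (simp, intro phi_add) (auto intro!: even_poly_sum)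
qed

lemma phi_inj:
  assumes "even_poly p" "even_poly q" "\<phi> (jcoset F p) = \<phi> (jcoset F q)"
  shows "jcoset F p = jcoset F q"
proof -
  have "inj_on \<phi> (carrier (Jac_even F))"
    using ring_iso_memE(5)[OF ring_iso] bij_betw_def by blast
  then show ?thesis using assms by (auto simp: inj_on_def)
qed

lemma phi_surj:
  assumes "even_poly r" shows "\<exists>p. even_poly p \<and> \<phi> (jcoset F p) = jcoset F' r"
proof -
  have "jcoset F' r \<in> carrier (Jac_even F')" using assms by auto
  then have "jcoset F' r \<in> \<phi> ` carrier (Jac_even F)"
    using ring_iso_memE(5)[OF ring_iso] by (simp add: bij_betw_def)
  then show ?thesis by auto
qed

lemma phi_graded:
  assumes "homogeneous (2 * n) p" shows "\<exists>q. homogeneous (2 * n) q \<and> \<phi> (jcoset F p) = jcoset F' q"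
  using iso assms by (simp add: graded_alg_iso_even_def)

lemma phi_hc2:
  assumes "even_poly p" "\<phi> (jcoset F p) = jcoset F' s"
  shows "\<phi> (jcoset F (hc 2 p)) = jcoset F' (hc 2 s)"
proof -
  define D where "D = wdeg ` Poly_Mapping.keys p"
  have finD: "finite D" unfolding D_def by simp
  have evD: "\<And>d. d \<in> D \<Longrightarrow> even d" using assms(1) by (auto simp: D_def even_poly_def)
  have "\<forall>d\<in>D. \<exists>r. homogeneous d r \<and> \<phi> (jcoset F (hc d p)) = jcoset F' r"
  proof
    fix d assume "d \<in> D"
    then obtain n where n: "d = 2 * n" using evD by blast
    have "homogeneous (2 * n) (hc d p)" using n by (simp add: homogeneous_homog homog_comp)
    then show "\<exists>r. homogeneous d r \<and> \<phi> (jcoset F (hc d p)) = jcoset F' r"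
      using phi_graded n by blast
  qed
  then obtain r where r: "\<And>d. d \<in> D \<Longrightarrow> homogeneous d (r d) \<and> \<phi> (jcoset F (hc d p)) = jcoset F' (r d)"
    by metis
  have pdec: "p = (\<Sum>d\<in>D. hc d p)" using comp_decomp[OF finD] D_def by blast
  have "\<phi> (jcoset F (\<Sum>d\<in>D. hc d p)) = jcoset F' (\<Sum>d\<in>D. r d)"
    by (rule phi_sum[OF finD]) (use r assms(1) even_poly_hc in auto)
  then have "jcoset F' (\<Sum>d\<in>D. r d) = jcoset F' s" using pdec assms(2) by simp
  then have m0: "(\<Sum>d\<in>D. r d) - s \<in> jac_ideal F'" by (simp add: jcoset_eq_iff)
  have mem: "hc 2 (\<Sum>d\<in>D. r d) - hc 2 s \<in> jac_ideal F'"
    using jac_hc[OF hg' hh' m0, of 2] by (simp add: comp_diff)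
  have hr: "hc 2 (\<Sum>d\<in>D. r d) = (if 2 \<in> D then r 2 else 0)"
  proof -
    have "hc 2 (\<Sum>d\<in>D. r d) = (\<Sum>d\<in>D. if d = 2 then r d else 0)"
      unfolding comp_sum
    proof (rule sum.cong)
      fix d assume "d \<in> D"
      then have "homog wdeg d (r d)" using r by (simp add: homogeneous_homog)
      then show "hc 2 (r d) = (if d = 2 then r d else 0)"
        using comp_self comp_other by metis
    qed simp
    then show ?thesis using finD by (simp add: sum.delta)
  qed
  have lhs: "\<phi> (jcoset F (hc 2 p)) = jcoset F' (if 2 \<in> D then r 2 else 0)"
  proof (cases "2 \<in> D")
    case True then show ?thesis using r by simp
  next
    case False
    then have "hc 2 p = 0" using comp_empty_degree D_def by metis
    then show ?thesis using False phi_zero by simp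
  qed
  have "homogeneous 2 (hc 2 (\<Sum>d\<in>D. r d) - hc 2 s)"
    by (simp add: homogeneous_homog homog_diff homog_comp)
  then have "hc 2 (\<Sum>d\<in>D. r d) - hc 2 s = 0"
    using jac_low[OF hg' hh' mem, of 2] by simp
  then show ?thesis using lhs hr by simp
qed

end


lemma vsplit_identity:
  fixes Q1 Q2 Q3 Q4 y g :: mpoly
  shows "(Q1 + const b1 * y) * (Q2 + const b2 * y) - (Q3 + const b3 * y) * (Q4 + const b4 * y) - const lam * (const 3 * y ^ 2 + g)
   = (Q1 * Q2 - Q3 * Q4 - const lam * g) + (const b1 * Q2 + const b2 * Q1 - const b3 * Q4 - const b4 * Q3) * y
     + const (b1 * b2 - b3 * b4 - 3 * lam) * y ^ 2"
  by (simp add: const_simps algebra_simps power2_eq_square)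

lemma homog_lin_comb:
  "(\<And>u. homogeneous d (f u)) \<Longrightarrow> homogeneous d (\<Sum>u\<in>UNIV. const (t u) * f u)"
  unfolding homogeneous_homog by (intro homog_sum homog_const_mult[OF additive_wdeg]) auto

lemma y_free_mon: "u \<noteq> W \<Longrightarrow> y_free (mon u)"
  by (cases u) (simp_all add: y_free_def mon_def)

context ctx
begin

definition qq :: "m2 \<Rightarrow> mpoly" where
  "qq u = (SOME r. homogeneous 2 r \<and> \<phi> (jcoset F (mon u)) = jcoset F' r)"

lemma qq: "homogeneous 2 (qq u)" "\<phi> (jcoset F (mon u)) = jcoset F' (qq u)"
proof -
  have "\<exists>r. homogeneous 2 r \<and> \<phi> (jcoset F (mon u)) = jcoset F' r"
    using phi_graded[of 1 "mon u"] homog_mon by simp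
  then have "homogeneous 2 (qq u) \<and> \<phi> (jcoset F (mon u)) = jcoset F' (qq u)"
    unfolding qq_def by (rule someI_ex)
  then show "homogeneous 2 (qq u)" "\<phi> (jcoset F (mon u)) = jcoset F' (qq u)" by auto
qed

definition cc :: "m2 \<Rightarrow> m2 \<Rightarrow> complex" where "cc u b = coef (qq u) b"

lemma qq_expand: "qq u = (\<Sum>b\<in>UNIV. const (cc u b) * mon b)"
  unfolding cc_def using hom2_expand[OF qq(1)] .

lemma phi_lin: "\<phi> (jcoset F (\<Sum>u\<in>UNIV. const (t u) * mon u)) = jcoset F' (\<Sum>u\<in>UNIV. const (t u) * qq u)"
  by (rule phi_sum) (simp_all add: even_poly_const_mult even_mon phi_smult[OF even_mon qq(2)])

lemma Inj:
  assumes "(\<Sum>u\<in>UNIV. const (t u) * qq u) = 0"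
  shows "t u = 0"
proof -
  have "\<phi> (jcoset F (\<Sum>u\<in>UNIV. const (t u) * mon u)) = \<phi> (jcoset F 0)"
    using phi_lin[of t] assms phi_zero by simp
  then have "jcoset F (\<Sum>u\<in>UNIV. const (t u) * mon u) = jcoset F 0"
    by (rule phi_inj[rotated 2]) (auto intro!: even_poly_sum even_poly_const_mult even_mon)
  then have m: "(\<Sum>u\<in>UNIV. const (t u) * mon u) \<in> jac_ideal F" by (simp add: jcoset_eq_iff)
  have "(\<Sum>u\<in>UNIV. const (t u) * mon u) = 0"
    using jac_low[OF hg hh m homog_lin2] by simp
  then show ?thesis by (rule lin2_zero)
qed

lemma Surj: "\<exists>t. (\<Sum>u\<in>UNIV. const (t u) * qq u) = mon b"
proof -
  obtain p where p: "even_poly p" "\<phi> (jcoset F p) = jcoset F' (mon b)"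
    using phi_surj[OF even_mon] by blast
  have "\<phi> (jcoset F (hc 2 p)) = jcoset F' (hc 2 (mon b))" by (rule phi_hc2[OF p])
  also have "hc 2 (mon b) = mon b" using homog_mon comp_self by (simp add: homogeneous_homog)
  finally have e: "\<phi> (jcoset F (hc 2 p)) = jcoset F' (mon b)" .
  define t where "t = coef (hc 2 p)"
  have "hc 2 p = (\<Sum>u\<in>UNIV. const (t u) * mon u)"
    unfolding t_def by (rule hom2_expand) (simp add: homogeneous_homog homog_comp)
  then have "jcoset F' (\<Sum>u\<in>UNIV. const (t u) * qq u) = jcoset F' (mon b)" using e phi_lin by simp
  then have m: "(\<Sum>u\<in>UNIV. const (t u) * qq u) - mon b \<in> jac_ideal F'" by (simp add: jcoset_eq_iff)
  have "homogeneous 2 ((\<Sum>u\<in>UNIV. const (t u) * qq u) - mon b)"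
    using homog_lin_comb[of 2 qq t] qq(1) homog_mon by (simp add: homogeneous_homog homog_diff)
  then have "(\<Sum>u\<in>UNIV. const (t u) * qq u) - mon b = 0" using jac_low[OF hg' hh' m, of 2] by simp
  then show ?thesis by auto
qed

lemma Veronese:
  assumes "mon u1 * mon u2 = mon u3 * mon u4"
  shows "\<exists>lam. qq u1 * qq u2 - qq u3 * qq u4 = const lam * (const 3 * pvar Y ^ 2 + g')"
proof -
  have "\<phi> (jcoset F (mon u1 * mon u2)) = jcoset F' (qq u1 * qq u2)"
    by (rule phi_mult) (simp_all add: even_mon qq)
  moreover have "\<phi> (jcoset F (mon u3 * mon u4)) = jcoset F' (qq u3 * qq u4)"
    by (rule phi_mult) (simp_all add: even_mon qq)
  ultimately have "jcoset F' (qq u1 * qq u2) = jcoset F' (qq u3 * qq u4)" using assms by simp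
  then have m: "qq u1 * qq u2 - qq u3 * qq u4 \<in> jac_ideal F'" by (simp add: jcoset_eq_iff)
  have "homogeneous 4 (qq u1 * qq u2 - qq u3 * qq u4)"
    using qq(1) homog_mult[OF additive_wdeg, of 2 "qq u1" 2 "qq u2"] homog_mult[OF additive_wdeg, of 2 "qq u3" 2 "qq u4"]
    by (simp add: homogeneous_homog homog_diff)
  then show ?thesis using jac_4[OF hg' hh' yg' yh' m] by blast
qed

definition bb :: "m2 \<Rightarrow> complex" where "bb u = cc u W"

definition QQ :: "m2 \<Rightarrow> mpoly" where "QQ u = qq u - const (bb u) * pvar Y"

lemma QQ_expand: "QQ u = (\<Sum>b\<in>UNIV. const (if b = W then 0 else cc u b) * mon b)"
proof -
  have "qq u = (\<Sum>b\<in>UNIV. const (if b = W then 0 else cc u b) * mon b) + const (bb u) * pvar Y"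
    unfolding qq_expand by (simp add: sum_m2 bb_def mon_simps)
  then show ?thesis by (simp add: QQ_def)
qed

lemma y_free_QQ: "y_free (QQ u)"
  unfolding QQ_expand y_free_homog
  by (intro homog_sum) (auto intro!: homog_const_mult[OF additive_ydeg] simp: y_free_mon[unfolded y_free_homog])

lemma homog_QQ: "homogeneous 2 (QQ u)"
  unfolding QQ_expand by (rule homog_lin_comb) (rule homog_mon)

lemma qq_QQ: "qq u = QQ u + const (bb u) * pvar Y"
  by (simp add: QQ_def)

lemma Veronese_split:
  assumes "mon u1 * mon u2 = mon u3 * mon u4"
  shows "\<exists>lam. QQ u1 * QQ u2 - QQ u3 * QQ u4 = const lam * g'
     \<and> const (bb u1) * QQ u2 + const (bb u2) * QQ u1 - const (bb u3) * QQ u4 - const (bb u4) * QQ u3 = 0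
     \<and> bb u1 * bb u2 - bb u3 * bb u4 = 3 * lam"
proof -
  obtain lam where l: "qq u1 * qq u2 - qq u3 * qq u4 = const lam * (const 3 * pvar Y ^ 2 + g')"
    using Veronese[OF assms] by blast
  let ?A = "QQ u1 * QQ u2 - QQ u3 * QQ u4 - const lam * g'"
  let ?B = "const (bb u1) * QQ u2 + const (bb u2) * QQ u1 - const (bb u3) * QQ u4 - const (bb u4) * QQ u3"
  let ?C = "const (bb u1 * bb u2 - bb u3 * bb u4 - 3 * lam)"
  have "?A + ?B * pvar Y + ?C * pvar Y ^ 2 = 0"
    using l vsplit_identity[of "QQ u1" "bb u1" "pvar Y" "QQ u2" "bb u2" "QQ u3" "bb u3" "QQ u4" "bb u4" lam g']
    by (simp add: qq_QQ)
  moreover have "y_free ?A" "y_free ?B" "y_free ?C"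
    using y_free_QQ yg' unfolding y_free_homog
    by (auto intro!: homog_diff homog_add homog_mult[OF additive_ydeg, of 0 _ 0, simplified]
        homog_const_mult[OF additive_ydeg] homog_const[OF additive_ydeg])
  ultimately have "?A = 0" "?B = 0" "?C = 0" using ysep by blast+
  then show ?thesis by (auto intro!: exI[of _ lam])
qed

end


lemma single_one_eq_iff [simp]: "Poly_Mapping.single a (1::complex) = Poly_Mapping.single b 1 \<longleftrightarrow> a = b"
  by (metis lookup_single_eq lookup_single_not_eq one_neq_zero)

lemma mon_rels:
  "mon Z11 * mon Z22 = mon Z12 * mon Z12"
  "mon Z11 * mon Z33 = mon Z13 * mon Z13"
  "mon Z22 * mon Z33 = mon Z23 * mon Z23"
  "mon Z11 * mon Z23 = mon Z12 * mon Z13"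
  "mon Z22 * mon Z13 = mon Z12 * mon Z23"
  "mon Z33 * mon Z12 = mon Z13 * mon Z23"
  by (simp_all add: mon_def mult_single)

context ctx
begin

lemma qq_comb: "(\<Sum>u\<in>UNIV. const (t u) * qq u) = (\<Sum>u\<in>UNIV. const (t u) * QQ u) + const (\<Sum>u\<in>UNIV. t u * bb u) * pvar Y"
proof -
  have "(\<Sum>u\<in>UNIV. const (t u) * qq u) = (\<Sum>u\<in>UNIV. const (t u) * QQ u + const (t u * bb u) * pvar Y)"
    by (simp add: qq_QQ distrib_left const_mult mult.assoc)
  also have "\<dots> = (\<Sum>u\<in>UNIV. const (t u) * QQ u) + (\<Sum>u\<in>UNIV. const (t u * bb u)) * pvar Y"
    by (simp add: sum.distrib sum_distrib_right)
  finally show ?thesis by (simp add: const_sum)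
qed

lemma pair_rel:
  assumes "(\<Sum>u\<in>UNIV. const (t u) * qq u) = const s * pvar Y"
      and "(\<Sum>u\<in>UNIV. const (t' u) * qq u) = const s' * pvar Y"
  shows "s' * t u = s * t' u"
proof -
  have "(\<Sum>u\<in>UNIV. const (s' * t u - s * t' u) * qq u)
     = const s' * (\<Sum>u\<in>UNIV. const (t u) * qq u) - const s * (\<Sum>u\<in>UNIV. const (t' u) * qq u)"
    by (simp add: const_simps sum_distrib_left sum_subtractf algebra_simps)
  also have "\<dots> = 0" using assms by (simp add: algebra_simps)
  finally have "s' * t u - s * t' u = 0" by (rule Inj)
  then show ?thesis by simp
qed

lemma single_rel:
  assumes "(\<Sum>u\<in>UNIV. const (t u) * qq u) = const 0 * pvar Y"
  shows "t u = 0"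
  using assms Inj by simp

definition tv :: "nat \<Rightarrow> m2 \<Rightarrow> complex" where
  "tv k u = (if k = 1 then (case u of Z11 \<Rightarrow> bb Z22 | Z22 \<Rightarrow> bb Z11 | Z12 \<Rightarrow> - 2 * bb Z12 | _ \<Rightarrow> 0)
     else if k = 2 then (case u of Z11 \<Rightarrow> bb Z33 | Z33 \<Rightarrow> bb Z11 | Z13 \<Rightarrow> - 2 * bb Z13 | _ \<Rightarrow> 0)
     else if k = 3 then (case u of Z22 \<Rightarrow> bb Z33 | Z33 \<Rightarrow> bb Z22 | Z23 \<Rightarrow> - 2 * bb Z23 | _ \<Rightarrow> 0)
     else (case u of Z11 \<Rightarrow> bb Z23 | Z23 \<Rightarrow> bb Z11 | Z12 \<Rightarrow> - bb Z13 | Z13 \<Rightarrow> - bb Z12 | _ \<Rightarrow> 0))"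

lemma tv_QQ: "k \<in> {1,2,3,4} \<Longrightarrow> (\<Sum>u\<in>UNIV. const (tv k u) * QQ u) = 0"
proof -
  assume k: "k \<in> {1,2,3,4}"
  obtain l1 where "const (bb Z11) * QQ Z22 + const (bb Z22) * QQ Z11 - const (bb Z12) * QQ Z12 - const (bb Z12) * QQ Z12 = 0"
    using Veronese_split[OF mon_rels(1)] by blast
  moreover obtain l2 where "const (bb Z11) * QQ Z33 + const (bb Z33) * QQ Z11 - const (bb Z13) * QQ Z13 - const (bb Z13) * QQ Z13 = 0"
    using Veronese_split[OF mon_rels(2)] by blast
  moreover obtain l3 where "const (bb Z22) * QQ Z33 + const (bb Z33) * QQ Z22 - const (bb Z23) * QQ Z23 - const (bb Z23) * QQ Z23 = 0"
    using Veronese_split[OF mon_rels(3)] by blast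
  moreover obtain l4 where "const (bb Z11) * QQ Z23 + const (bb Z23) * QQ Z11 - const (bb Z12) * QQ Z13 - const (bb Z13) * QQ Z12 = 0"
    using Veronese_split[OF mon_rels(4)] by blast
  ultimately show ?thesis using k
    by (auto simp: sum_m2 tv_def const_simps algebra_simps)
qed

lemma tv_rel: "k \<in> {1,2,3,4} \<Longrightarrow> (\<Sum>u\<in>UNIV. const (tv k u) * qq u) = const (\<Sum>u\<in>UNIV. tv k u * bb u) * pvar Y"
  using tv_QQ qq_comb by simp

lemma tv_minor:
  assumes "k \<in> {1,2,3,4}" "k' \<in> {1,2,3,4}"
  shows "tv k u * tv k' u' = tv k u' * tv k' u"
proof -
  define s where "s j = (\<Sum>u\<in>UNIV. tv j u * bb u)" for j
  have rel: "j \<in> {1,2,3,4} \<Longrightarrow> (\<Sum>u\<in>UNIV. const (tv j u) * qq u) = const (s j) * pvar Y" for j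
    using tv_rel s_def by simp
  show ?thesis
  proof (cases "\<exists>j\<in>{1,2,3,4}. s j \<noteq> 0")
    case True
    then obtain j where j: "j \<in> {1,2,3,4}" "s j \<noteq> 0" by blast
    have e: "i \<in> {1,2,3,4} \<Longrightarrow> tv i v = s i * tv j v / s j" for i v
      using pair_rel[OF rel[OF j(1)] rel[of i], of v] j(2) by (simp add: field_simps)
    show ?thesis using e[OF assms(1)] e[OF assms(2)] by (simp add: field_simps)
  next
    case False
    then have "s k = 0" using assms(1) by blast
    then have "tv k v = 0" for v using single_rel[of "tv k"] rel[OF assms(1)] by simp
    then show ?thesis by simp
  qed
qed

lemma bb_zero: "u \<noteq> W \<Longrightarrow> bb u = 0"
proof -
  have m: "k \<in> {1,2,3,4} \<Longrightarrow> k' \<in> {1,2,3,4} \<Longrightarrow> tv k u * tv k' u' = tv k u' * tv k' u" for k k' u u'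
    using tv_minor by blast
  have "bb Z11 = 0" using m[of 1 2 Z22 Z33] by (simp add: tv_def)
  moreover have "bb Z22 = 0" using m[of 1 3 Z11 Z33] by (simp add: tv_def)
  moreover have "bb Z33 = 0" using m[of 2 3 Z11 Z22] by (simp add: tv_def)
  moreover have "bb Z12 = 0" using m[of 1 4 Z12 Z13] by (simp add: tv_def)
  moreover have "bb Z13 = 0" using m[of 2 4 Z13 Z12] by (simp add: tv_def)
  moreover have "bb Z23 = 0" using m[of 3 4 Z23 Z11] by (simp add: tv_def)
  ultimately show "u \<noteq> W \<Longrightarrow> bb u = 0" by (cases u) auto
qed

lemma qq_is_QQ: "u \<noteq> W \<Longrightarrow> qq u = QQ u"
  using bb_zero by (simp add: qq_QQ)

lemma Veronese_exact:
  assumes "mon u1 * mon u2 = mon u3 * mon u4" "u1 \<noteq> W" "u2 \<noteq> W" "u3 \<noteq> W" "u4 \<noteq> W"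
  shows "QQ u1 * QQ u2 = QQ u3 * QQ u4"
proof -
  obtain lam where l: "QQ u1 * QQ u2 - QQ u3 * QQ u4 = const lam * g'"
     "bb u1 * bb u2 - bb u3 * bb u4 = 3 * lam"
    using Veronese_split[OF assms(1)] by blast
  then have "lam = 0" using bb_zero assms by simp
  then show ?thesis using l by simp
qed

end


lemma quartic_zero:
  fixes c0 c1 c2 c3 c4 :: complex
  assumes "\<And>t. c0 + c1 * t + c2 * t^2 + c3 * t^3 + c4 * t^4 = 0"
  shows "c0 = 0 \<and> c1 = 0 \<and> c2 = 0 \<and> c3 = 0 \<and> c4 = 0"
proof -
  have e0: "c0 = 0" using assms[of 0] by simp
  have e1: "c0 + c1 + c2 + c3 + c4 = 0" using assms[of 1] by simp
  have e2: "c0 - c1 + c2 - c3 + c4 = 0" using assms[of "-1"] by simp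
  have e3: "c0 + 2*c1 + 4*c2 + 8*c3 + 16*c4 = 0" using assms[of 2] by (simp add: algebra_simps)
  have e4: "c0 - 2*c1 + 4*c2 - 8*c3 + 16*c4 = 0" using assms[of "-2"] by (simp add: algebra_simps)
  have s1: "2 * c2 + 2 * c4 = 0"
  proof -
    have "2 * c2 + 2 * c4 = (c0 + c1 + c2 + c3 + c4) + (c0 - c1 + c2 - c3 + c4) - 2 * c0"
      by (simp add: algebra_simps)
    also have "\<dots> = 0" unfolding e1 e2 using e0 by simp
    finally show ?thesis .
  qed
  have s2: "2 * c1 + 2 * c3 = 0"
  proof -
    have "2 * c1 + 2 * c3 = (c0 + c1 + c2 + c3 + c4) - (c0 - c1 + c2 - c3 + c4)"
      by (simp add: algebra_simps)
    also have "\<dots> = 0" unfolding e1 e2 by simp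
    finally show ?thesis .
  qed
  have s3: "8 * c2 + 32 * c4 = 0"
  proof -
    have "8 * c2 + 32 * c4 = (c0 + 2*c1 + 4*c2 + 8*c3 + 16*c4) + (c0 - 2*c1 + 4*c2 - 8*c3 + 16*c4) - 2 * c0"
      by (simp add: algebra_simps)
    also have "\<dots> = 0" unfolding e3 e4 using e0 by simp
    finally show ?thesis .
  qed
  have s4: "4 * c1 + 16 * c3 = 0"
  proof -
    have "4 * c1 + 16 * c3 = (c0 + 2*c1 + 4*c2 + 8*c3 + 16*c4) - (c0 - 2*c1 + 4*c2 - 8*c3 + 16*c4)"
      by (simp add: algebra_simps)
    also have "\<dots> = 0" unfolding e3 e4 by simp
    finally show ?thesis .
  qed
  have "2 * (c2 + c4) = 2 * c2 + 2 * c4" by (rule distrib_left)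
  also have "\<dots> = 0" by (rule s1)
  finally have "2 * (c2 + c4) = 0" .
  then have "c2 + c4 = 0" by (simp only: mult_eq_0_iff) simp
  then have c2: "c2 = - c4" by (simp add: eq_neg_iff_add_eq_0)
  have "24 * c4 = 8 * c2 + 32 * c4" unfolding c2 by simp
  also have "\<dots> = 0" by (rule s3)
  finally have c4: "c4 = 0" by simp
  have "2 * (c1 + c3) = 2 * c1 + 2 * c3" by (rule distrib_left)
  also have "\<dots> = 0" by (rule s2)
  finally have "2 * (c1 + c3) = 0" .
  then have "c1 + c3 = 0" by (simp only: mult_eq_0_iff) simp
  then have c1: "c1 = - c3" by (simp add: eq_neg_iff_add_eq_0)
  have "12 * c3 = 4 * c1 + 16 * c3" unfolding c1 by simp
  also have "\<dots> = 0" by (rule s4)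
  finally have c3: "c3 = 0" by simp
  show ?thesis using e0 c2 c4 c1 c3 by simp
qed


datatype idx = I1 | I2 | I3

lemma UNIV_idx: "(UNIV :: idx set) = {I1, I2, I3}"
  using idx.exhaust by auto

lemma sum_idx: "(\<Sum>k\<in>UNIV. f k) = f I1 + f I2 + (f I3 :: 'a::comm_monoid_add)"
  by (simp add: UNIV_idx add.assoc)

lemma all_idx: "(\<forall>k. P k) \<longleftrightarrow> P I1 \<and> P I2 \<and> P I3"
  by (metis idx.exhaust)

lemma lemmaP:
  fixes u :: "idx \<Rightarrow> complex" and X :: "idx \<Rightarrow> idx \<Rightarrow> complex"
  assumes ur: "u r \<noteq> 0" and sym: "\<And>i j. X i j = X j i"
    and h: "\<And>i j m n. u i * u m * X j n + X i m * u j * u n - u i * u n * X j m - X i n * u j * u m = 0"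
  shows "X i j = u i * ((X r j - u j * X r r / (2 * u r)) / u r) + ((X r i - u i * X r r / (2 * u r)) / u r) * u j"
proof -
  have e: "u r * u r * X i j + X r r * u i * u j - u r * u j * X i r - X r j * u i * u r = 0"
    by (rule h)
  have s: "X i r = X r i" using sym by simp
  have e': "u r * u r * X i j - (u r * u j * X r i + X r j * u i * u r - X r r * u i * u j) = 0"
  proof -
    have "u r * u r * X i j - (u r * u j * X r i + X r j * u i * u r - X r r * u i * u j)
        = u r * u r * X i j + X r r * u i * u j - u r * u j * X i r - X r j * u i * u r"
      unfolding s by (simp add: algebra_simps)
    then show ?thesis using e by simp
  qed
  have x: "X i j = (u r * u j * X r i + X r j * u i * u r - X r r * u i * u j) / (u r * u r)"
    using e' ur by (simp add: eq_divide_eq mult.commute)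
  show ?thesis by (subst x) (use ur in \<open>simp add: field_simps\<close>)
qed

definition pol :: "(idx \<Rightarrow> idx \<Rightarrow> complex) \<Rightarrow> (idx \<Rightarrow> idx \<Rightarrow> complex) \<Rightarrow> idx \<Rightarrow> idx \<Rightarrow> idx \<Rightarrow> idx \<Rightarrow> complex" where
  "pol X Z i j m n = X i m * Z j n + Z i m * X j n - X i n * Z j m - Z i n * X j m"

definition minr :: "(idx \<Rightarrow> idx \<Rightarrow> complex) \<Rightarrow> idx \<Rightarrow> idx \<Rightarrow> idx \<Rightarrow> idx \<Rightarrow> complex" where
  "minr X i j m n = X i m * X j n - X i n * X j m"

definition wedge :: "(idx \<Rightarrow> complex) \<Rightarrow> (idx \<Rightarrow> complex) \<Rightarrow> idx \<Rightarrow> idx \<Rightarrow> complex" where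
  "wedge x y i j = x i * y j - x j * y i"

definition sp :: "(idx \<Rightarrow> complex) \<Rightarrow> (idx \<Rightarrow> complex) \<Rightarrow> idx \<Rightarrow> idx \<Rightarrow> complex" where
  "sp x y i j = x i * y j + y i * x j"

definition op :: "(idx \<Rightarrow> complex) \<Rightarrow> idx \<Rightarrow> idx \<Rightarrow> complex" where
  "op x i j = x i * x j"

lemma id_A: "minr (sp u a) i j m n = - pol (op u) (op a) i j m n"
  by (simp add: minr_def sp_def pol_def op_def algebra_simps)

lemma id_B: "pol (sp u a) (\<lambda>i j. op a i j + sp u w i j) i j m n
   = wedge u w i j * wedge a u m n + wedge a u i j * wedge u w m n"
  by (simp add: sp_def pol_def op_def wedge_def algebra_simps)

lemma id_C: "minr (\<lambda>i j. op a i j + sp u w i j) i j m n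
   = wedge a u i j * wedge a w m n + wedge a w i j * wedge a u m n - wedge u w i j * wedge u w m n"
  by (simp add: minr_def sp_def op_def wedge_def algebra_simps)


lemma symprod:
  fixes X Z :: "idx \<Rightarrow> idx \<Rightarrow> complex"
  assumes "\<And>i j m n. X i j * Z m n + Z i j * X m n = 0"
  shows "(\<forall>i j. X i j = 0) \<or> (\<forall>i j. Z i j = 0)"
proof (rule ccontr)
  assume "\<not> ?thesis"
  then obtain i j k l where x: "X i j \<noteq> 0" and z: "Z k l \<noteq> 0" by blast
  have "X i j * Z i j = 0" using assms[of i j i j] by simp
  then have zij: "Z i j = 0" using x by simp
  have "X i j * Z k l + Z i j * X k l = 0" by (rule assms)
  then show False using x z zij by simp
qed

lemma sqz:
  fixes X :: "idx \<Rightarrow> idx \<Rightarrow> complex"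
  assumes "\<And>i j m n. X i j * X m n = 0"
  shows "X i j = 0"
  using assms[of i j i j] by simp

lemma wedge0:
  assumes "\<And>i j. wedge x u i j = 0" "u r \<noteq> (0::complex)"
  shows "x i = (x r / u r) * u i"
  using assms(1)[of i r] assms(2) by (simp add: wedge_def field_simps)

lemma wedge_swap: "wedge x y i j = - wedge y x i j"
  by (simp add: wedge_def)

lemma core:
  fixes u :: "idx \<Rightarrow> complex" and R S :: "idx \<Rightarrow> idx \<Rightarrow> complex"
  assumes ur: "u r \<noteq> 0" and symR: "\<And>i j. R i j = R j i" and symS: "\<And>i j. S i j = S j i"
    and h1: "\<And>i j m n. pol (op u) R i j m n = 0"
    and h2: "\<And>i j m n. pol (op u) S i j m n + minr R i j m n = 0"
    and h3: "\<And>i j m n. pol R S i j m n = 0"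
    and h4: "\<And>i j m n. minr S i j m n = 0"
  defines "a \<equiv> \<lambda>j. (R r j - u j * R r r / (2 * u r)) / u r"
  shows "(\<forall>i j. S i j = a i * a j) \<or> (\<exists>\<kappa> \<zeta>. \<forall>i j. R i j = \<kappa> * (u i * u j) \<and> S i j = \<zeta> * (u i * u j))"
proof -
  have "R i j = u i * a j + a i * u j" for i j
    unfolding a_def
    by (rule lemmaP[where X = R and u = u and r = r, OF ur symR]) (use h1 in \<open>simp add: pol_def op_def algebra_simps\<close>)
  then have Rf: "R = sp u a" by (auto simp: sp_def fun_eq_iff algebra_simps)
  define D where "D i j = S i j - a i * a j" for i j
  have symD: "D i j = D j i" for i j using symS by (simp add: D_def mult.commute)
  have hD: "pol (op u) D i j m n = 0" for i j m n
  proof -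
    have "pol (op u) D i j m n = pol (op u) S i j m n - pol (op u) (op a) i j m n"
      by (simp add: pol_def D_def op_def algebra_simps)
    also have "\<dots> = pol (op u) S i j m n + minr R i j m n"
      using id_A[of u a i j m n] by (simp add: Rf)
    finally show ?thesis using h2 by simp
  qed
  define w where "w j = (D r j - u j * D r r / (2 * u r)) / u r" for j
  have "D i j = u i * w j + w i * u j" for i j
    unfolding w_def
    by (rule lemmaP[where X = D and u = u and r = r, OF ur symD]) (use hD in \<open>simp add: pol_def op_def algebra_simps\<close>)
  then have Sf: "S = (\<lambda>i j. op a i j + sp u w i j)"
    by (auto simp: fun_eq_iff D_def op_def sp_def algebra_simps)
  have H3: "wedge u w i j * wedge a u m n + wedge a u i j * wedge u w m n = 0" for i j m n
    using h3[of i j m n] id_B[of u a w i j m n] by (simp add: Rf Sf)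
  have H4: "wedge a u i j * wedge a w m n + wedge a w i j * wedge a u m n - wedge u w i j * wedge u w m n = 0" for i j m n
    using h4[of i j m n] id_C[of a u w i j m n] by (simp add: Sf)
  have degen: ?thesis if A: "\<And>i j. wedge a u i j = 0"
  proof -
    have "wedge u w i j * wedge u w m n = 0" for i j m n using H4[of i j m n] A by simp
    then have "wedge u w i j = 0" for i j by (rule sqz)
    then have "wedge w u i j = 0" for i j using wedge_swap[of w u i j] by simp
    then have wf: "w i = (w r / u r) * u i" for i using wedge0[of w u r] ur by blast
    have af: "a i = (a r / u r) * u i" for i using wedge0[of a u r] A ur by blast
    show ?thesis
    proof (rule disjI2, intro exI allI conjI)
      fix i j
      show "R i j = (2 * (a r / u r)) * (u i * u j)"
        unfolding Rf sp_def by (subst (1 2) af) (simp add: algebra_simps)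
      show "S i j = ((a r / u r) * (a r / u r) + 2 * (w r / u r)) * (u i * u j)"
        unfolding Sf sp_def op_def by (subst (1 2) af, subst (1 2) wf) (simp add: algebra_simps)
    qed
  qed
  from symprod[OF H3] show ?thesis
  proof
    assume B: "\<forall>i j. wedge u w i j = 0"
    have "wedge w u i j = 0" for i j using B wedge_swap[of w u i j] by simp
    then have wf: "w i = (w r / u r) * u i" for i using wedge0[of w u r] ur by blast
    have G: "wedge a u i j * wedge a w m n + wedge a w i j * wedge a u m n = 0" for i j m n
      using H4[of i j m n] B by simp
    from symprod[OF G] show ?thesis
    proof
      assume "\<forall>i j. wedge a u i j = 0" then show ?thesis using degen by simp
    next
      assume C: "\<forall>i j. wedge a w i j = 0"
      have "wedge a w i j = (w r / u r) * wedge a u i j" for i j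
        unfolding wedge_def by (subst (1 2) wf) (simp add: algebra_simps)
      then have wa: "(w r / u r) * wedge a u i j = 0" for i j using C by simp
      show ?thesis
      proof (cases "w r / u r = 0")
        case True
        have w0: "w i = 0" for i using wf[of i] True by simp
        have "S i j = a i * a j" for i j by (simp add: Sf op_def sp_def w0)
        then show ?thesis by blast
      next
        case False
        have "wedge a u i j = 0" for i j using wa[of i j] False by simp
        then show ?thesis by (rule degen)
      qed
    qed
  next
    assume "\<forall>i j. wedge a u i j = 0" then show ?thesis using degen by simp
  qed
qed


fun zp :: "idx \<Rightarrow> idx \<Rightarrow> m2" where
  "zp I1 I1 = Z11" | "zp I2 I2 = Z22" | "zp I3 I3 = Z33"
| "zp I1 I2 = Z12" | "zp I2 I1 = Z12" | "zp I1 I3 = Z13" | "zp I3 I1 = Z13"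
| "zp I2 I3 = Z23" | "zp I3 I2 = Z23"

lemma zp_sym: "zp i j = zp j i"
  by (cases i; cases j; simp)

fun pi1 :: "m2 \<Rightarrow> idx" where
  "pi1 Z11 = I1" | "pi1 Z22 = I2" | "pi1 Z33 = I3" | "pi1 Z12 = I1" | "pi1 Z13 = I1" | "pi1 Z23 = I2" | "pi1 W = I1"
fun pi2 :: "m2 \<Rightarrow> idx" where
  "pi2 Z11 = I1" | "pi2 Z22 = I2" | "pi2 Z33 = I3" | "pi2 Z12 = I2" | "pi2 Z13 = I3" | "pi2 Z23 = I3" | "pi2 W = I1"

definition zs :: "m2 set" where "zs = {Z11, Z22, Z33, Z12, Z13, Z23}"

lemma zp_pi: "u \<in> zs \<Longrightarrow> zp (pi1 u) (pi2 u) = u"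
  by (auto simp: zs_def)

lemma zp_in_zs [simp]: "zp i j \<in> zs"
  by (cases i; cases j; simp add: zs_def)

lemma sum_zs: "(\<Sum>u\<in>zs. f u) = f Z11 + f Z22 + f Z33 + f Z12 + f Z13 + (f Z23 :: 'a::comm_monoid_add)"
  by (simp add: zs_def add.assoc)

fun mvx :: "m2 \<Rightarrow> (idx \<Rightarrow> complex) \<Rightarrow> complex" where
  "mvx Z11 x = x I1 * x I1" | "mvx Z22 x = x I2 * x I2" | "mvx Z33 x = x I3 * x I3"
| "mvx Z12 x = x I1 * x I2" | "mvx Z13 x = x I1 * x I3" | "mvx Z23 x = x I2 * x I3" | "mvx W x = 0"

lemma mvx_zp: "mvx (zp k l) x = x k * x l"
  by (cases k; cases l; simp add: mult.commute)

lemma mvx_quad: "mvx b (\<lambda>k. x k + t * y k) = mvx b x + t * (mvx b (\<lambda>k. x k + y k) - mvx b x - mvx b y) + t^2 * mvx b y"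
  by (cases b) (simp_all add: algebra_simps power2_eq_square)

definition ee :: "idx \<Rightarrow> idx \<Rightarrow> complex" where "ee k = (\<lambda>l. if l = k then 1 else 0)"

definition dm :: "m2 \<Rightarrow> (idx \<Rightarrow> complex) \<Rightarrow> complex" where
  "dm b p = mvx b (\<lambda>k. ee I1 k + p k) - mvx b (ee I1) - mvx b p"

lemma dm_simps: "dm Z11 p = 2 * p I1" "dm Z12 p = p I2" "dm Z13 p = p I3"
  "dm Z22 p = 0" "dm Z33 p = 0" "dm Z23 p = 0" "dm W p = 0"
  by (simp_all add: dm_def ee_def algebra_simps)

lemma mvx_ee1: "mvx b (ee I1) = (if b = Z11 then 1 else 0)"
  by (cases b) (simp_all add: ee_def)

lemma interchange:
  fixes B :: "m2 \<Rightarrow> m2 \<Rightarrow> complex"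
  assumes eq: "\<And>u. u \<in> zs \<Longrightarrow> (\<Sum>b\<in>zs. B u b * v b) = wv u"
    and T: "\<And>b'. b' \<in> zs \<Longrightarrow> (\<Sum>u\<in>zs. T u * B u b') = (if b' = b0 then 1 else 0)"
    and b0: "b0 \<in> zs"
  shows "v b0 = (\<Sum>u\<in>zs. T u * wv u)"
proof -
  have "(\<Sum>u\<in>zs. T u * wv u) = (\<Sum>u\<in>zs. T u * (\<Sum>b\<in>zs. B u b * v b))"
    using eq by simp
  also have "\<dots> = (\<Sum>u\<in>zs. \<Sum>b\<in>zs. T u * B u b * v b)"
    by (simp add: sum_distrib_left mult.assoc)
  also have "\<dots> = (\<Sum>b\<in>zs. \<Sum>u\<in>zs. T u * B u b * v b)"
    by (rule sum.swap)
  also have "\<dots> = (\<Sum>b\<in>zs. (\<Sum>u\<in>zs. T u * B u b) * v b)"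
    by (simp add: sum_distrib_right)
  also have "\<dots> = (\<Sum>b\<in>zs. (if b = b0 then 1 else 0) * v b)"
    using T by simp
  also have "\<dots> = (\<Sum>b\<in>zs. if b = b0 then v b else 0)"
    by (rule sum.cong) auto
  also have "\<dots> = v b0" using b0 by (simp add: sum.delta zs_def)
  finally show ?thesis by simp
qed

lemma rank1_factor:
  fixes M :: "idx \<Rightarrow> idx \<Rightarrow> complex"
  assumes sym: "\<And>i j. M i j = M j i" and mn: "\<And>i j m n. minr M i j m n = 0" and nz: "M i0 j0 \<noteq> 0"
  shows "\<exists>u r. u r \<noteq> 0 \<and> (\<forall>i j. M i j = u i * u j)"
proof (cases "\<exists>r. M r r \<noteq> 0")
  case True
  then obtain r where r: "M r r \<noteq> 0" by blast
  define c where "c = csqrt (M r r)"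
  have c2: "c * c = M r r" by (simp add: c_def power2_eq_square[symmetric])
  have c0: "c \<noteq> 0" using r c2 by auto
  define u where "u i = M r i / c" for i
  have "u r \<noteq> 0" using r c0 by (simp add: u_def)
  moreover have "M i j = u i * u j" for i j
  proof -
    have "M r r * M i j - M r j * M i r = 0" using mn[of r i r j] by (simp add: minr_def)
    then show ?thesis using c2 c0 sym[of i r] r by (simp add: u_def field_simps)
  qed
  ultimately show ?thesis by blast
next
  case False
  then have "M i i = 0" for i by simp
  moreover have "M i0 i0 * M j0 j0 - M i0 j0 * M j0 i0 = 0" using mn[of i0 j0 i0 j0] by (simp add: minr_def)
  ultimately show ?thesis using nz sym[of j0 i0] by simp
qed

lemma minr_expand:
  fixes M R S :: "idx \<Rightarrow> idx \<Rightarrow> complex"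
  shows "minr (\<lambda>i j. M i j + t * R i j + t^2 * S i j) i j m n
   = minr M i j m n + pol M R i j m n * t + (pol M S i j m n + minr R i j m n) * t^2
     + pol R S i j m n * t^3 + minr S i j m n * t^4"
  by (simp add: minr_def pol_def algebra_simps power2_eq_square power3_eq_cube power4_eq_xxxx)


lemma dm_lin: "dm b p = (\<Sum>k\<in>UNIV. p k * dm b (ee k))"
  by (cases b) (simp_all add: dm_def ee_def sum_idx algebra_simps)

lemma mvx_scale1: "p I2 = 0 \<Longrightarrow> p I3 = 0 \<Longrightarrow> mvx b p = (p I1)^2 * mvx b (ee I1)"
  by (cases b) (simp_all add: ee_def power2_eq_square)

theorem rank1:
  fixes B :: "m2 \<Rightarrow> m2 \<Rightarrow> complex"
  defines "Qm \<equiv> \<lambda>x i j. \<Sum>b\<in>zs. B (zp i j) b * mvx b x"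
  assumes minors: "\<And>x i j m n. minr (Qm x) i j m n = 0"
    and surj: "\<And>b. b \<in> zs \<Longrightarrow> \<exists>T. \<forall>b'\<in>zs. (\<Sum>u\<in>zs. T u * B u b') = (if b' = b then 1 else 0)"
  shows "\<exists>A. (\<forall>x i j. Qm x i j = (\<Sum>k\<in>UNIV. A i k * x k) * (\<Sum>k\<in>UNIV. A j k * x k))
     \<and> (\<forall>x. (\<forall>i. (\<Sum>k\<in>UNIV. A i k * x k) = 0) \<longrightarrow> (\<forall>k. x k = 0))"
proof -
  have symQ: "Qm x i j = Qm x j i" for x i j unfolding Qm_def by (simp add: zp_sym[of i j])
  have quad: "Qm (\<lambda>k. x k + t * y k) i j = Qm x i j + t * (Qm (\<lambda>k. x k + y k) i j - Qm x i j - Qm y i j) + t^2 * Qm y i j"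
    for x y t i j
    unfolding Qm_def mvx_quad
    by (simp add: sum.distrib sum_subtractf sum_distrib_left algebra_simps)
  define M where "M = Qm (ee I1)"
  have M_B: "M i j = B (zp i j) Z11" for i j
  proof -
    have "M i j = (\<Sum>b\<in>zs. if b = Z11 then B (zp i j) b else 0)"
      unfolding M_def Qm_def mvx_ee1 by (rule sum.cong) auto
    then show ?thesis by (simp add: sum.delta zs_def)
  qed
  have "Z11 \<in> zs" by (simp add: zs_def)
  then obtain T1 where T1: "\<forall>b'\<in>zs. (\<Sum>u\<in>zs. T1 u * B u b') = (if b' = Z11 then 1 else 0)"
    using surj by blast
  have "\<exists>v\<in>zs. B v Z11 \<noteq> 0"
  proof (rule ccontr)
    assume "\<not> ?thesis"
    then have "(\<Sum>u\<in>zs. T1 u * B u Z11) = 0" by simp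
    then show False using T1 \<open>Z11 \<in> zs\<close> by auto
  qed
  then obtain v where v: "v \<in> zs" "B v Z11 \<noteq> 0" by blast
  have "M (pi1 v) (pi2 v) \<noteq> 0" using v M_B zp_pi by simp
  moreover have "M i j = M j i" for i j by (simp add: M_def symQ)
  moreover have "minr M i j m n = 0" for i j m n unfolding M_def by (rule minors)
  ultimately obtain u r where ur: "u r \<noteq> 0" and Mu: "\<And>i j. M i j = u i * u j"
    using rank1_factor by metis
  have Mop: "M = op u" by (auto simp: fun_eq_iff Mu op_def)
  define Rp where "Rp p i j = Qm (\<lambda>k. ee I1 k + p k) i j - M i j - Qm p i j" for p i j
  have Rp_B: "Rp p i j = (\<Sum>b\<in>zs. B (zp i j) b * dm b p)" for p i j
    unfolding Rp_def M_def Qm_def dm_def by (simp add: sum_subtractf sum.distrib algebra_simps)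
  define a where "a p j = (Rp p r j - u j * Rp p r r / (2 * u r)) / u r" for p j
  have main: "Qm p i j = a p i * a p j" for p i j
  proof -
    have h: "minr (\<lambda>i j. M i j + t * Rp p i j + t^2 * Qm p i j) i j m n = 0" for t i j m n
    proof -
      have "(\<lambda>i j. M i j + t * Rp p i j + t^2 * Qm p i j) = Qm (\<lambda>k. ee I1 k + t * p k)"
        by (auto simp: fun_eq_iff quad Rp_def M_def)
      then show ?thesis using minors by simp
    qed
    have c: "pol M (Rp p) i j m n = 0 \<and> pol M (Qm p) i j m n + minr (Rp p) i j m n = 0
      \<and> pol (Rp p) (Qm p) i j m n = 0 \<and> minr (Qm p) i j m n = 0" for i j m n
      using quartic_zero[of "minr M i j m n" "pol M (Rp p) i j m n" "pol M (Qm p) i j m n + minr (Rp p) i j m n"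
        "pol (Rp p) (Qm p) i j m n" "minr (Qm p) i j m n"] h[of _ i j m n]
      unfolding minr_expand by (simp add: algebra_simps)
    have symR: "Rp p i j = Rp p j i" for i j by (simp add: Rp_def symQ M_def)
    from core[of u r "Rp p" "Qm p", OF ur symR symQ]
    have "(\<forall>i j. Qm p i j = a p i * a p j) \<or> (\<exists>\<kappa> \<zeta>. \<forall>i j. Rp p i j = \<kappa> * (u i * u j) \<and> Qm p i j = \<zeta> * (u i * u j))"
      using c unfolding Mop a_def by blast
    then show ?thesis
    proof
      assume "\<forall>i j. Qm p i j = a p i * a p j" then show ?thesis by blast
    next
      assume "\<exists>\<kappa> \<zeta>. \<forall>i j. Rp p i j = \<kappa> * (u i * u j) \<and> Qm p i j = \<zeta> * (u i * u j)"
      then obtain \<kappa> where k: "\<And>i j. Rp p i j = \<kappa> * M i j" by (auto simp: Mu)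
      have eqs: "(\<Sum>b\<in>zs. B w b * (dm b p - \<kappa> * (if b = Z11 then 1 else 0))) = 0" if "w \<in> zs" for w
      proof -
        have "(\<Sum>b\<in>zs. B w b * dm b p) = \<kappa> * B w Z11"
          using k[of "pi1 w" "pi2 w"] Rp_B[of p "pi1 w" "pi2 w"] M_B[of "pi1 w" "pi2 w"] zp_pi[OF that] by simp
        moreover have "(\<Sum>b\<in>zs. B w b * (\<kappa> * (if b = Z11 then 1 else 0))) = \<kappa> * B w Z11"
        proof -
          have "(\<Sum>b\<in>zs. B w b * (\<kappa> * (if b = Z11 then 1 else 0))) = (\<Sum>b\<in>zs. if b = Z11 then \<kappa> * B w b else 0)"
            by (rule sum.cong) auto
          then show ?thesis by (simp add: sum.delta zs_def)
        qed
        ultimately show ?thesis by (simp add: right_diff_distrib sum_subtractf)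
      qed
      have vb: "dm b0 p - \<kappa> * (if b0 = Z11 then 1 else 0) = 0" if b0z: "b0 \<in> zs" for b0
      proof -
        obtain T where T: "\<forall>b'\<in>zs. (\<Sum>u\<in>zs. T u * B u b') = (if b' = b0 then 1 else 0)"
          using surj[OF b0z] by blast
        show ?thesis using interchange[of B "\<lambda>b. dm b p - \<kappa> * (if b = Z11 then 1 else 0)" "\<lambda>_. 0" T b0] eqs T b0z
          by simp
      qed
      have p2: "p I2 = 0" using vb[of Z12] by (simp add: zs_def dm_simps)
      have p3: "p I3 = 0" using vb[of Z13] by (simp add: zs_def dm_simps)
      have p1: "\<kappa> = 2 * p I1" using vb[of Z11] by (simp add: zs_def dm_simps)
      have Qp: "Qm p i j = (p I1)^2 * M i j" for i j
        unfolding M_def Qm_def by (simp add: mvx_scale1[OF p2 p3] sum_distrib_left algebra_simps)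
      have ap: "a p j = p I1 * u j" for j
        using ur unfolding a_def k Mu p1 by (simp add: field_simps)
      show ?thesis by (simp add: Qp ap Mu power2_eq_square algebra_simps)
    qed
  qed
  define A where "A i k = a (ee k) i" for i k
  have Rlin: "Rp p i j = (\<Sum>k\<in>UNIV. p k * Rp (ee k) i j)" for p i j
    unfolding Rp_B
    by (subst dm_lin) (simp add: sum_distrib_left sum_distrib_right sum.swap[of _ UNIV zs] algebra_simps)
  have alin: "a p i = (\<Sum>k\<in>UNIV. A i k * p k)" for p i
    unfolding A_def a_def
    using ur by (subst (1 2) Rlin) (simp add: sum_idx field_simps)
  show ?thesis
  proof (intro exI conjI allI impI)
    fix x i j
    show "Qm x i j = (\<Sum>k\<in>UNIV. A i k * x k) * (\<Sum>k\<in>UNIV. A j k * x k)"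
      using main alin by simp
  next
    fix x k
    assume z: "\<forall>i. (\<Sum>k\<in>UNIV. A i k * x k) = 0"
    have Q0: "Qm x i j = 0" for i j using main alin z by simp
    obtain T where T: "\<forall>b'\<in>zs. (\<Sum>u\<in>zs. T u * B u b') = (if b' = zp k k then 1 else 0)"
      using surj[of "zp k k"] by auto
    have "mvx (zp k k) x = (\<Sum>u\<in>zs. T u * 0)"
    proof (rule interchange[of B "\<lambda>b. mvx b x" "\<lambda>_. 0" T])
      fix w assume "w \<in> zs"
      then show "(\<Sum>b\<in>zs. B w b * mvx b x) = 0" using Q0[of "pi1 w" "pi2 w"] zp_pi by (simp add: Qm_def)
    qed (use T in auto)
    then show "x k = 0" by (simp add: mvx_zp)
  qed
qed


section \<open>Evaluation / substitution homomorphisms\<close>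

definition mvv :: "(var \<Rightarrow> 'a::comm_ring_1) \<Rightarrow> (var \<Rightarrow>\<^sub>0 nat) \<Rightarrow> 'a" where
  "mvv \<sigma> m = \<sigma> X1 ^ Poly_Mapping.lookup m X1 * \<sigma> X2 ^ Poly_Mapping.lookup m X2
     * \<sigma> X3 ^ Poly_Mapping.lookup m X3 * \<sigma> Y ^ Poly_Mapping.lookup m Y"

lemma mvv_0 [simp]: "mvv \<sigma> 0 = 1"
  by (simp add: mvv_def)

lemma mvv_add: "mvv \<sigma> (m + n) = mvv \<sigma> m * mvv \<sigma> n"
  by (simp add: mvv_def lookup_add power_add algebra_simps)

locale chi_hom =
  fixes \<chi> :: "complex \<Rightarrow> 'a::comm_ring_1"
  assumes chi_0: "\<chi> 0 = 0" and chi_1: "\<chi> 1 = 1"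
    and chi_add: "\<chi> (a + b) = \<chi> a + \<chi> b" and chi_mult: "\<chi> (a * b) = \<chi> a * \<chi> b"
begin

definition gev :: "(var \<Rightarrow> 'a) \<Rightarrow> mpoly \<Rightarrow> 'a" where
  "gev \<sigma> p = (\<Sum>m\<in>Poly_Mapping.keys p. \<chi> (Poly_Mapping.lookup p m) * mvv \<sigma> m)"

lemma gev_superset:
  assumes "finite S" "Poly_Mapping.keys p \<subseteq> S"
  shows "gev \<sigma> p = (\<Sum>m\<in>S. \<chi> (Poly_Mapping.lookup p m) * mvv \<sigma> m)"
  unfolding gev_def
  by (rule sum.mono_neutral_left) (use assms in \<open>auto simp: in_keys_iff chi_0\<close>)

lemma gev_add: "gev \<sigma> (p + q) = gev \<sigma> p + gev \<sigma> q"
proof -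
  let ?S = "Poly_Mapping.keys p \<union> Poly_Mapping.keys q"
  have "gev \<sigma> (p + q) = (\<Sum>m\<in>?S. \<chi> (Poly_Mapping.lookup (p + q) m) * mvv \<sigma> m)"
    by (rule gev_superset) (auto simp: keys_add)
  also have "\<dots> = (\<Sum>m\<in>?S. \<chi> (Poly_Mapping.lookup p m) * mvv \<sigma> m) + (\<Sum>m\<in>?S. \<chi> (Poly_Mapping.lookup q m) * mvv \<sigma> m)"
    by (simp add: lookup_add chi_add distrib_right sum.distrib)
  also have "\<dots> = gev \<sigma> p + gev \<sigma> q"
    by (subst (1 2) gev_superset[where S = ?S]) auto
  finally show ?thesis .
qed

lemma gev_0 [simp]: "gev \<sigma> 0 = 0"
  by (simp add: gev_def)

lemma gev_sum: "gev \<sigma> (sum f A) = (\<Sum>x\<in>A. gev \<sigma> (f x))"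
  by (induction A rule: infinite_finite_induct) (simp_all add: gev_add)

lemma gev_single: "gev \<sigma> (Poly_Mapping.single m c) = \<chi> c * mvv \<sigma> m"
  by (subst gev_superset[where S = "{m}"]) auto

lemma gev_uminus: "gev \<sigma> (- p) = - gev \<sigma> p"
  using gev_add[of \<sigma> "-p" p] by (simp add: eq_neg_iff_add_eq_0)

lemma gev_diff: "gev \<sigma> (p - q) = gev \<sigma> p - gev \<sigma> q"
  using gev_add[of \<sigma> p "-q"] gev_uminus[of \<sigma> q] by simp


lemma gev_mult: "gev \<sigma> (p * q) = gev \<sigma> p * gev \<sigma> q"
proof -
  let ?K = "Poly_Mapping.keys p" and ?L = "Poly_Mapping.keys q"
  have "p * q = (\<Sum>m\<in>?K. Poly_Mapping.single m (Poly_Mapping.lookup p m)) * (\<Sum>n\<in>?L. Poly_Mapping.single n (Poly_Mapping.lookup q n))"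
    using pm_sum_single[of p] pm_sum_single[of q] by simp
  also have "\<dots> = (\<Sum>m\<in>?K. \<Sum>n\<in>?L. Poly_Mapping.single (m + n) (Poly_Mapping.lookup p m * Poly_Mapping.lookup q n))"
    by (simp add: sum_product mult_single)
  finally have "gev \<sigma> (p * q) = (\<Sum>m\<in>?K. \<Sum>n\<in>?L. \<chi> (Poly_Mapping.lookup p m) * mvv \<sigma> m * (\<chi> (Poly_Mapping.lookup q n) * mvv \<sigma> n))"
    by (simp add: gev_sum gev_single chi_mult mvv_add algebra_simps)
  also have "\<dots> = gev \<sigma> p * gev \<sigma> q"
    unfolding gev_def by (rule sum_product[symmetric])
  finally show ?thesis .
qed

lemma gev_const: "gev \<sigma> (const c) = \<chi> c"
  by (simp add: const_def gev_single)

lemma gev_one: "gev \<sigma> 1 = 1"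
  using gev_const[of \<sigma> 1] chi_1 by simp

lemma gev_power: "gev \<sigma> (p ^ k) = gev \<sigma> p ^ k"
  by (induction k) (simp_all add: gev_one gev_mult)

lemma gev_pvar: "gev \<sigma> (pvar v) = \<sigma> v"
  by (cases v) (simp_all add: pvar_def gev_single chi_1 mvv_def lookup_single)

lemma gev_yfree_cong:
  assumes "y_free p" "\<sigma> X1 = \<tau> X1" "\<sigma> X2 = \<tau> X2" "\<sigma> X3 = \<tau> X3"
  shows "gev \<sigma> p = gev \<tau> p"
  unfolding gev_def
  by (rule sum.cong) (use assms in \<open>auto simp: y_free_def mvv_def\<close>)

end

interpretation cev: chi_hom "\<lambda>c::complex. c"
  by unfold_locales simp_all

interpretation csub: chi_hom const
  by unfold_locales (simp_all add: const_simps)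

abbreviation subst :: "(var \<Rightarrow> mpoly) \<Rightarrow> mpoly \<Rightarrow> mpoly" where "subst \<equiv> csub.gev"
abbreviation evalp :: "(var \<Rightarrow> complex) \<Rightarrow> mpoly \<Rightarrow> complex" where "evalp \<equiv> cev.gev"

lemma mvv_pvar: "mvv pvar m = Poly_Mapping.single m 1"
proof -
  have "mvv pvar m = Poly_Mapping.single (mk (Poly_Mapping.lookup m X1) 0 0 0 + mk 0 (Poly_Mapping.lookup m X2) 0 0
      + mk 0 0 (Poly_Mapping.lookup m X3) 0 + mk 0 0 0 (Poly_Mapping.lookup m Y)) 1"
    by (simp add: mvv_def pvar_X_power pvar_Y_power mult_single del: mk_add)
  also have "\<dots> = Poly_Mapping.single m 1" by (subst (2) mk_expand) simp
  finally show ?thesis .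
qed

lemma subst_pvar: "subst pvar p = p"
proof -
  have "subst pvar p = (\<Sum>m\<in>Poly_Mapping.keys p. const (Poly_Mapping.lookup p m) * Poly_Mapping.single m 1)"
    by (simp add: csub.gev_def mvv_pvar)
  also have "\<dots> = p" by (simp add: const_single pm_sum_single[symmetric])
  finally show ?thesis .
qed

lemma mvv_subst: "subst \<sigma> (mvv \<tau> m) = mvv (\<lambda>v. subst \<sigma> (\<tau> v)) m"
  by (simp add: mvv_def csub.gev_mult csub.gev_power)

lemma subst_subst: "subst \<sigma> (subst \<tau> p) = subst (\<lambda>v. subst \<sigma> (\<tau> v)) p"
proof -
  have e: "subst \<tau> p = (\<Sum>m\<in>Poly_Mapping.keys p. const (Poly_Mapping.lookup p m) * mvv \<tau> m)"
    by (rule csub.gev_def)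
  have "subst \<sigma> (subst \<tau> p) = (\<Sum>m\<in>Poly_Mapping.keys p. subst \<sigma> (const (Poly_Mapping.lookup p m) * mvv \<tau> m))"
    unfolding e by (rule csub.gev_sum)
  also have "\<dots> = (\<Sum>m\<in>Poly_Mapping.keys p. const (Poly_Mapping.lookup p m) * mvv (\<lambda>v. subst \<sigma> (\<tau> v)) m)"
    by (simp add: csub.gev_mult csub.gev_const mvv_subst)
  also have "\<dots> = subst (\<lambda>v. subst \<sigma> (\<tau> v)) p" by (rule csub.gev_def[symmetric])
  finally show ?thesis .
qed

lemma subst_homog:
  assumes "homogeneous 1 (\<sigma> X1)" "homogeneous 1 (\<sigma> X2)" "homogeneous 1 (\<sigma> X3)" "homogeneous 2 (\<sigma> Y)"
    and "homogeneous d p"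
  shows "homogeneous d (subst \<sigma> p)"
  unfolding csub.gev_def homogeneous_homog
proof (rule homog_sum)
  fix m assume m: "m \<in> Poly_Mapping.keys p"
  have "homog wdeg (Poly_Mapping.lookup m X1 * 1 + Poly_Mapping.lookup m X2 * 1 + Poly_Mapping.lookup m X3 * 1 + Poly_Mapping.lookup m Y * 2) (mvv \<sigma> m)"
    unfolding mvv_def using assms(1-4)
    by (intro homog_mult[OF additive_wdeg] homog_power[OF additive_wdeg]) (simp_all add: homogeneous_homog)
  then have "homog wdeg (wdeg m) (mvv \<sigma> m)" by (simp add: wdeg_def algebra_simps)
  then have "homog wdeg d (mvv \<sigma> m)" using m assms(5) by (simp add: homogeneous_def)
  then show "homog wdeg d (const (Poly_Mapping.lookup p m) * mvv \<sigma> m)"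
    by (rule homog_const_mult[OF additive_wdeg])
qed


lemma lookup_const_mult: "Poly_Mapping.lookup (const c * q) m = c * Poly_Mapping.lookup q m"
proof -
  have "const c * q = q * Poly_Mapping.single 0 c" by (simp add: const_def mult.commute)
  then show ?thesis using lookup_mult_single_shift[of q 0 c m] by simp
qed

lemma coef_lin: "coef (\<Sum>u\<in>UNIV. const (t u) * f u) b = (\<Sum>u\<in>UNIV. t u * coef (f u) b)"
  by (simp add: coef_def lookup_sum lookup_const_mult)

lemma coef_mon: "coef (mon b) b' = (if b' = b then 1 else 0)"
  by (simp add: coef_def mon_def lookup_single when_def)

lemma UNIV_m2_zs: "(UNIV :: m2 set) = insert W zs" and W_notin_zs: "W \<notin> zs"
  by (auto simp: zs_def UNIV_m2)

definition pointx :: "(idx \<Rightarrow> complex) \<Rightarrow> var \<Rightarrow> complex" where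
  "pointx x v = (case v of X1 \<Rightarrow> x I1 | X2 \<Rightarrow> x I2 | X3 \<Rightarrow> x I3 | Y \<Rightarrow> 0)"

lemma evalp_mon: "evalp (pointx x) (mon b) = mvx b x"
  by (cases b) (simp_all add: mon_simps cev.gev_mult cev.gev_pvar cev.gev_power pointx_def power2_eq_square)

fun pX :: "idx \<Rightarrow> mpoly" where "pX I1 = pvar X1" | "pX I2 = pvar X2" | "pX I3 = pvar X3"

lemma mon_zp: "mon (zp k l) = pX k * pX l"
  by (cases k; cases l; simp add: mon_simps power2_eq_square mult.commute)

lemma mvx_ee: "mvx b (ee k) = (if b = zp k k then 1 else 0)"
  by (cases b; cases k; simp add: ee_def)

lemma mvx_ee2: "k \<noteq> l \<Longrightarrow> mvx b (\<lambda>m. ee k m + ee l m) = (if b = zp k k \<or> b = zp l l \<or> b = zp k l then 1 else 0)"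
  by (cases b; cases k; cases l; simp add: ee_def)

lemma sum_ee: "(\<Sum>m\<in>UNIV. f m * ee k m) = (f k :: complex)"
  by (cases k) (simp_all add: sum_idx ee_def)

lemma sum_ee2: "(\<Sum>m\<in>UNIV. f m * (ee k m + ee l m)) = (f k + f l :: complex)"
  by (simp add: distrib_left sum.distrib sum_ee)

context ctx
begin

definition Bq :: "m2 \<Rightarrow> m2 \<Rightarrow> complex" where "Bq u b = (if b = W then 0 else cc u b)"

lemma QQ_zs: "QQ u = (\<Sum>b\<in>zs. const (Bq u b) * mon b)"
  unfolding QQ_expand Bq_def UNIV_m2_zs using W_notin_zs by (simp add: Bq_def)

lemma evalp_QQ: "evalp (pointx x) (QQ u) = (\<Sum>b\<in>zs. Bq u b * mvx b x)"
  unfolding QQ_zs by (simp add: cev.gev_sum cev.gev_mult cev.gev_const evalp_mon)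

lemma minors_QQ: "minr (\<lambda>i j. \<Sum>b\<in>zs. Bq (zp i j) b * mvx b x) i j m n = 0"
proof -
  define E where "E u = evalp (pointx x) (QQ u)" for u
  have r: "E Z11 * E Z22 = E Z12 * E Z12" "E Z11 * E Z33 = E Z13 * E Z13" "E Z22 * E Z33 = E Z23 * E Z23"
    "E Z11 * E Z23 = E Z12 * E Z13" "E Z22 * E Z13 = E Z12 * E Z23" "E Z33 * E Z12 = E Z13 * E Z23"
    using Veronese_exact[OF mon_rels(1)] Veronese_exact[OF mon_rels(2)] Veronese_exact[OF mon_rels(3)]
      Veronese_exact[OF mon_rels(4)] Veronese_exact[OF mon_rels(5)] Veronese_exact[OF mon_rels(6)]
    by (simp_all add: E_def cev.gev_mult[symmetric])
  have eqE: "(\<lambda>i j. \<Sum>b\<in>zs. Bq (zp i j) b * mvx b x) = (\<lambda>i j. E (zp i j))"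
    by (simp add: E_def evalp_QQ)
  have "minr (\<lambda>i j. E (zp i j)) i j m n = 0"
    unfolding minr_def using r
    by (cases i; cases j; cases m; cases n) (simp_all add: algebra_simps)
  then show ?thesis by (simp add: eqE)
qed

lemma Surj_coef:
  obtains t where "\<And>b'. (\<Sum>u\<in>UNIV. t u * cc u b') = (if b' = b then 1 else 0)"
proof -
  obtain t where t: "(\<Sum>u\<in>UNIV. const (t u) * qq u) = mon b" using Surj by blast
  have "(\<Sum>u\<in>UNIV. t u * cc u b') = (if b' = b then 1 else 0)" for b'
    using arg_cong[OF t, of "\<lambda>q. coef q b'"] by (simp add: coef_lin coef_mon cc_def)
  then show ?thesis using that by blast
qed

definition aw :: complex where "aw = cc W W"

lemma cc_W: "u \<noteq> W \<Longrightarrow> cc u W = 0"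
  using bb_zero by (simp add: bb_def)

lemma sum_zs_ccW: "(\<Sum>u\<in>zs. t u * cc u W) = 0"
proof (rule sum.neutral, rule ballI)
  fix u assume "u \<in> zs"
  then have "u \<noteq> W" using W_notin_zs by auto
  then show "t u * cc u W = 0" by (simp add: cc_W)
qed

lemma aw_nz: "aw \<noteq> 0"
proof -
  obtain t where "\<And>b'. (\<Sum>u\<in>UNIV. t u * cc u b') = (if b' = W then 1 else 0)" using Surj_coef by blast
  from this[of W] have "t W * cc W W = 1"
    unfolding UNIV_m2_zs using W_notin_zs sum_zs_ccW by simp
  then show ?thesis by (auto simp: aw_def)
qed

lemma surjB: "b \<in> zs \<Longrightarrow> \<exists>T. \<forall>b'\<in>zs. (\<Sum>u\<in>zs. T u * Bq u b') = (if b' = b then 1 else 0)"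
proof -
  assume b: "b \<in> zs"
  obtain t where t: "\<And>b'. (\<Sum>u\<in>UNIV. t u * cc u b') = (if b' = b then 1 else 0)" using Surj_coef by blast
  have s: "(\<Sum>u\<in>UNIV. t u * cc u b') = t W * cc W b' + (\<Sum>u\<in>zs. t u * cc u b')" for b'
    unfolding UNIV_m2_zs using W_notin_zs by simp
  have "t W * aw = 0"
    using t[of W] s[of W] b W_notin_zs sum_zs_ccW by (auto simp: aw_def)
  then have tW: "t W = 0" using aw_nz by simp
  show ?thesis
  proof (intro exI ballI)
    fix b' assume "b' \<in> zs"
    then have "b' \<noteq> W" using W_notin_zs by auto
    then show "(\<Sum>u\<in>zs. t u * Bq u b') = (if b' = b then 1 else 0)"
      using t[of b'] s[of b'] tW by (simp add: Bq_def)
  qed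
qed

definition AA :: "idx \<Rightarrow> idx \<Rightarrow> complex" where
  "AA = (SOME A. (\<forall>x i j. (\<Sum>b\<in>zs. Bq (zp i j) b * mvx b x) = (\<Sum>k\<in>UNIV. A i k * x k) * (\<Sum>k\<in>UNIV. A j k * x k))
     \<and> (\<forall>x. (\<forall>i. (\<Sum>k\<in>UNIV. A i k * x k) = 0) \<longrightarrow> (\<forall>k. x k = 0)))"

lemma AA: "\<And>x i j. (\<Sum>b\<in>zs. Bq (zp i j) b * mvx b x) = (\<Sum>k\<in>UNIV. AA i k * x k) * (\<Sum>k\<in>UNIV. AA j k * x k)"
  "\<And>x. (\<forall>i. (\<Sum>k\<in>UNIV. AA i k * x k) = 0) \<Longrightarrow> x k = 0"
proof -
  have ex: "\<exists>A. (\<forall>x i j. (\<Sum>b\<in>zs. Bq (zp i j) b * mvx b x) = (\<Sum>k\<in>UNIV. A i k * x k) * (\<Sum>k\<in>UNIV. A j k * x k))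
     \<and> (\<forall>x. (\<forall>i. (\<Sum>k\<in>UNIV. A i k * x k) = 0) \<longrightarrow> (\<forall>k. x k = 0))"
    by (rule rank1[of Bq]) (use minors_QQ surjB in auto)
  have "(\<forall>x i j. (\<Sum>b\<in>zs. Bq (zp i j) b * mvx b x) = (\<Sum>k\<in>UNIV. AA i k * x k) * (\<Sum>k\<in>UNIV. AA j k * x k))
     \<and> (\<forall>x. (\<forall>i. (\<Sum>k\<in>UNIV. AA i k * x k) = 0) \<longrightarrow> (\<forall>k. x k = 0))"
    unfolding AA_def by (rule someI_ex[OF ex])
  then show "\<And>x i j. (\<Sum>b\<in>zs. Bq (zp i j) b * mvx b x) = (\<Sum>k\<in>UNIV. AA i k * x k) * (\<Sum>k\<in>UNIV. AA j k * x k)"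
    "\<And>x. (\<forall>i. (\<Sum>k\<in>UNIV. AA i k * x k) = 0) \<Longrightarrow> x k = 0" by blast+
qed

lemma sum_zs_delta: "b0 \<in> zs \<Longrightarrow> (\<Sum>b\<in>zs. f b * (if b = b0 then 1 else 0)) = (f b0 :: complex)"
proof -
  assume "b0 \<in> zs"
  have "(\<Sum>b\<in>zs. f b * (if b = b0 then 1 else 0)) = (\<Sum>b\<in>zs. if b = b0 then f b else 0)"
    by (rule sum.cong) auto
  then show ?thesis using \<open>b0 \<in> zs\<close> by (simp add: sum.delta zs_def)
qed

lemma Bq_diag: "Bq (zp i j) (zp k k) = AA i k * AA j k"
proof -
  have "(\<Sum>b\<in>zs. Bq (zp i j) b * mvx b (ee k)) = Bq (zp i j) (zp k k)"
    unfolding mvx_ee by (rule sum_zs_delta) simp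
  then show ?thesis using AA(1)[of i j "ee k"] by (simp add: sum_ee)
qed

lemma zp_distinct: "k \<noteq> l \<Longrightarrow> zp k k \<noteq> zp l l \<and> zp k k \<noteq> zp k l \<and> zp l l \<noteq> zp k l"
  by (cases k; cases l; simp)

lemma Bq_off:
  assumes kl: "k \<noteq> l"
  shows "Bq (zp i j) (zp k l) = AA i k * AA j l + AA i l * AA j k"
proof -
  have mv: "mvx b (\<lambda>m. ee k m + ee l m) = (if b = zp k k then 1 else 0) + (if b = zp l l then 1 else 0) + (if b = zp k l then 1 else 0)" for b
    unfolding mvx_ee2[OF kl] using zp_distinct[OF kl] by auto
  have "(\<Sum>b\<in>zs. Bq (zp i j) b * mvx b (\<lambda>m. ee k m + ee l m))
      = Bq (zp i j) (zp k k) + Bq (zp i j) (zp l l) + Bq (zp i j) (zp k l)"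
    unfolding mv by (simp add: distrib_left sum.distrib sum_zs_delta)
  then have "Bq (zp i j) (zp k k) + Bq (zp i j) (zp l l) + Bq (zp i j) (zp k l) = (AA i k + AA i l) * (AA j k + AA j l)"
    using AA(1)[of i j "\<lambda>m. ee k m + ee l m"] by (simp add: sum_ee2)
  then show ?thesis by (simp add: Bq_diag algebra_simps)
qed

definition ll :: "idx \<Rightarrow> mpoly" where "ll i = (\<Sum>k\<in>UNIV. const (AA i k) * pX k)"

lemma QQ_prod: "QQ (zp i j) = ll i * ll j"
proof -
  have b: "Bq (zp i j) Z11 = AA i I1 * AA j I1" "Bq (zp i j) Z22 = AA i I2 * AA j I2" "Bq (zp i j) Z33 = AA i I3 * AA j I3"
    "Bq (zp i j) Z12 = AA i I1 * AA j I2 + AA i I2 * AA j I1"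
    "Bq (zp i j) Z13 = AA i I1 * AA j I3 + AA i I3 * AA j I1"
    "Bq (zp i j) Z23 = AA i I2 * AA j I3 + AA i I3 * AA j I2"
    using Bq_diag[of i j I1] Bq_diag[of i j I2] Bq_diag[of i j I3]
      Bq_off[of I1 I2 i j] Bq_off[of I1 I3 i j] Bq_off[of I2 I3 i j] by simp_all
  show ?thesis
    unfolding QQ_zs ll_def sum_zs sum_idx b
    by (simp add: mon_simps const_simps algebra_simps power2_eq_square)
qed

lemma qq_prod: "qq (zp i j) = ll i * ll j"
proof -
  have "zp i j \<noteq> W" by (cases i; cases j; simp)
  then show ?thesis using qq_is_QQ QQ_prod by simp
qed

lemma AA_inj: "(\<And>i. (\<Sum>k\<in>UNIV. AA i k * x k) = 0) \<Longrightarrow> x k = 0"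
  using AA(2) by blast

end


definition det3 :: "(idx \<Rightarrow> idx \<Rightarrow> complex) \<Rightarrow> complex" where
  "det3 A = A I1 I1 * (A I2 I2 * A I3 I3 - A I2 I3 * A I3 I2) - A I1 I2 * (A I2 I1 * A I3 I3 - A I2 I3 * A I3 I1)
     + A I1 I3 * (A I2 I1 * A I3 I2 - A I2 I2 * A I3 I1)"

fun adj3 :: "(idx \<Rightarrow> idx \<Rightarrow> complex) \<Rightarrow> idx \<Rightarrow> idx \<Rightarrow> complex" where
  "adj3 A I1 I1 = A I2 I2 * A I3 I3 - A I2 I3 * A I3 I2"
| "adj3 A I1 I2 = A I1 I3 * A I3 I2 - A I1 I2 * A I3 I3"
| "adj3 A I1 I3 = A I1 I2 * A I2 I3 - A I1 I3 * A I2 I2"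
| "adj3 A I2 I1 = A I2 I3 * A I3 I1 - A I2 I1 * A I3 I3"
| "adj3 A I2 I2 = A I1 I1 * A I3 I3 - A I1 I3 * A I3 I1"
| "adj3 A I2 I3 = A I1 I3 * A I2 I1 - A I1 I1 * A I2 I3"
| "adj3 A I3 I1 = A I2 I1 * A I3 I2 - A I2 I2 * A I3 I1"
| "adj3 A I3 I2 = A I1 I2 * A I3 I1 - A I1 I1 * A I3 I2"
| "adj3 A I3 I3 = A I1 I1 * A I2 I2 - A I1 I2 * A I2 I1"

lemma adj_right: "(\<Sum>k\<in>UNIV. A i k * adj3 A k j) = (if i = j then det3 A else 0)"
  by (cases i; cases j) (simp_all add: sum_idx det3_def algebra_simps)

lemma adj_left: "(\<Sum>k\<in>UNIV. adj3 A i k * A k j) = (if i = j then det3 A else 0)"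
  by (cases i; cases j) (simp_all add: sum_idx det3_def algebra_simps)

lemma adj_zero_minor:
  assumes "\<And>i j. adj3 A i j = 0"
  shows "A j k * A i l - A j l * A i k = 0"
proof -
  have e: "A I2 I2 * A I3 I3 - A I2 I3 * A I3 I2 = 0" "A I1 I3 * A I3 I2 - A I1 I2 * A I3 I3 = 0"
    "A I1 I2 * A I2 I3 - A I1 I3 * A I2 I2 = 0" "A I2 I3 * A I3 I1 - A I2 I1 * A I3 I3 = 0"
    "A I1 I1 * A I3 I3 - A I1 I3 * A I3 I1 = 0" "A I1 I3 * A I2 I1 - A I1 I1 * A I2 I3 = 0"
    "A I2 I1 * A I3 I2 - A I2 I2 * A I3 I1 = 0" "A I1 I2 * A I3 I1 - A I1 I1 * A I3 I2 = 0"
    "A I1 I1 * A I2 I2 - A I1 I2 * A I2 I1 = 0"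
    using assms[of I1 I1] assms[of I1 I2] assms[of I1 I3] assms[of I2 I1] assms[of I2 I2] assms[of I2 I3]
      assms[of I3 I1] assms[of I3 I2] assms[of I3 I3] by simp_all
  show ?thesis using e
    by (cases i; cases j; cases k; cases l) (simp_all add: algebra_simps)
qed

lemma det_nz:
  assumes inj: "\<And>x k. (\<And>i. (\<Sum>m\<in>UNIV. A i m * x m) = 0) \<Longrightarrow> x k = 0"
  shows "det3 A \<noteq> 0"
proof
  assume d: "det3 A = 0"
  have adj0: "adj3 A k j = 0" for k j
    using inj[of "\<lambda>k. adj3 A k j" k] adj_right[of A _ j] d by simp
  have A0: "A i k = 0" for i k
  proof -
    obtain l where l: "l \<noteq> k" by (cases k) (auto intro: idx.distinct)
    define x where "x m = A i l * ee k m - A i k * ee l m" for m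
    have "(\<Sum>m\<in>UNIV. A j m * x m) = 0" for j
    proof -
      have "(\<Sum>m\<in>UNIV. A j m * x m) = A i l * (\<Sum>m\<in>UNIV. A j m * ee k m) - A i k * (\<Sum>m\<in>UNIV. A j m * ee l m)"
        by (simp add: x_def algebra_simps sum_subtractf sum_distrib_left)
      also have "\<dots> = A j k * A i l - A j l * A i k" by (simp add: sum_ee algebra_simps)
      also have "\<dots> = 0" by (rule adj_zero_minor) (rule adj0)
      finally show ?thesis .
    qed
    then have "x l = 0" using inj by blast
    then show ?thesis using l by (simp add: x_def ee_def)
  qed
  have "ee I1 I1 = 0" using inj[of "ee I1" I1] A0 by simp
  then show False by (simp add: ee_def)
qed

definition inv3 :: "(idx \<Rightarrow> idx \<Rightarrow> complex) \<Rightarrow> idx \<Rightarrow> idx \<Rightarrow> complex" where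
  "inv3 A i j = adj3 A i j / det3 A"

lemma inv3_right: "det3 A \<noteq> 0 \<Longrightarrow> (\<Sum>k\<in>UNIV. A i k * inv3 A k j) = (if i = j then 1 else 0)"
  using adj_right[of A i j] by (simp add: inv3_def sum_divide_distrib[symmetric] times_divide_eq_right)

lemma inv3_left: "det3 A \<noteq> 0 \<Longrightarrow> (\<Sum>k\<in>UNIV. inv3 A i k * A k j) = (if i = j then 1 else 0)"
  using adj_left[of A i j] by (simp add: inv3_def sum_divide_distrib[symmetric] times_divide_eq_left)


lemma mono_decomp:
  assumes "m \<noteq> 0" "even (wdeg m)"
  shows "\<exists>u m'. m = m' + mexp u"
proof -
  define a b c d where "a = Poly_Mapping.lookup m X1" "b = Poly_Mapping.lookup m X2"
    "c = Poly_Mapping.lookup m X3" "d = Poly_Mapping.lookup m Y"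
  have m: "m = mk a b c d" unfolding a_b_c_d_def by (rule mk_expand)
  have ev: "even (a + b + c)" using assms(2) by (simp add: m)
  have nz: "a + b + c + d > 0" using assms(1) m by (auto simp: mk_zero[symmetric] simp del: mk_zero)
  show ?thesis
  proof (cases "d \<ge> 1")
    case True
    then show ?thesis by (intro exI[of _ W] exI[of _ "mk a b c (d - 1)"]) (simp add: m)
  next
    case d0: False
    show ?thesis
    proof (cases "a \<ge> 2")
      case True
      then show ?thesis by (intro exI[of _ Z11] exI[of _ "mk (a - 2) b c d"]) (simp add: m)
    next
      case a2: False
      show ?thesis
      proof (cases "a = 1")
        case a1: True
        show ?thesis
        proof (cases "b \<ge> 1")
          case True
          then show ?thesis using a1 by (intro exI[of _ Z12] exI[of _ "mk 0 (b - 1) c d"]) (simp add: m)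
        next
          case False
          then have "c \<ge> 1" using ev a1 by presburger
          then show ?thesis using a1 False by (intro exI[of _ Z13] exI[of _ "mk 0 b (c - 1) d"]) (simp add: m)
        qed
      next
        case False
        then have a0: "a = 0" using a2 by simp
        show ?thesis
        proof (cases "b \<ge> 2")
          case True
          then show ?thesis using a0 by (intro exI[of _ Z22] exI[of _ "mk 0 (b - 2) c d"]) (simp add: m)
        next
          case b2: False
          show ?thesis
          proof (cases "b = 1")
            case True
            then have "c \<ge> 1" using ev a0 by presburger
            then show ?thesis using a0 True by (intro exI[of _ Z23] exI[of _ "mk 0 0 (c - 1) d"]) (simp add: m)
          next
            case False
            then have "c \<ge> 2" using ev a0 b2 d0 nz by presburger
            then show ?thesis using a0 False b2 by (intro exI[of _ Z33] exI[of _ "mk 0 0 (c - 2) d"]) (simp add: m)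
          qed
        qed
      qed
    qed
  qed
qed

lemma even_poly_one [simp]: "even_poly 1"
  using even_poly_const[of 1] by simp

lemma wdeg_mexp [simp]: "wdeg (mexp u) = 2"
  by (cases u) simp_all

lemma even_poly_single: "even (wdeg m) \<Longrightarrow> even_poly (Poly_Mapping.single m c)"
  by (simp add: even_poly_def)

context ctx
begin

fun sig :: "var \<Rightarrow> mpoly" where
  "sig X1 = ll I1" | "sig X2 = ll I2" | "sig X3 = ll I3" | "sig Y = qq W"

definition psi :: "mpoly \<Rightarrow> mpoly" where "psi = subst sig"

lemma psi_pX: "psi (pX k) = ll k"
  by (cases k) (simp_all add: psi_def csub.gev_pvar)

lemma psi_mon: "psi (mon u) = qq u"
proof (cases "u = W")
  case True then show ?thesis by (simp add: psi_def mon_simps csub.gev_pvar)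
next
  case False
  then have "u \<in> zs" by (cases u) (simp_all add: zs_def)
  then have u: "u = zp (pi1 u) (pi2 u)" by (simp add: zp_pi)
  show ?thesis by (subst (1 2) u) (simp add: mon_zp psi_def csub.gev_mult psi_pX[unfolded psi_def] qq_prod)
qed

lemma psi_mult: "psi (p * q) = psi p * psi q" by (simp add: psi_def csub.gev_mult)
lemma psi_add: "psi (p + q) = psi p + psi q" by (simp add: psi_def csub.gev_add)
lemma psi_const: "psi (const c) = const c" by (simp add: psi_def csub.gev_const)
lemma psi_one: "psi 1 = 1" by (simp add: psi_def csub.gev_one)

lemma homog_ll: "homogeneous 1 (ll i)"
  unfolding ll_def homogeneous_homog
  by (intro homog_sum homog_const_mult[OF additive_wdeg]) (case_tac x; simp only: pX.simps homog_pvar)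

lemma psi_homog: "homogeneous d p \<Longrightarrow> homogeneous d (psi p)"
  unfolding psi_def by (rule subst_homog) (simp_all only: sig.simps homog_ll qq(1))

lemma phi_psi_mono:
  assumes "even (wdeg m)"
  shows "\<phi> (jcoset F (Poly_Mapping.single m c)) = jcoset F' (psi (Poly_Mapping.single m c))"
  using assms
proof (induction "wdeg m" arbitrary: m c rule: less_induct)
  case less
  show ?case
  proof (cases "m = 0")
    case True
    have "\<phi> (jcoset F (const c * 1)) = jcoset F' (const c * 1)"
      by (rule phi_smult) (simp_all add: phi_one)
    then show ?thesis using True by (simp add: const_def[symmetric] psi_const)
  next
    case False
    obtain u m' where m: "m = m' + mexp u" using mono_decomp[OF False less.prems] by blast
    have wm: "wdeg m = wdeg m' + 2" by (simp add: m wdeg_add)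
    have ev': "even (wdeg m')" using less.prems wm by simp
    have IH: "\<phi> (jcoset F (Poly_Mapping.single m' c)) = jcoset F' (psi (Poly_Mapping.single m' c))"
      using less.hyps[of m' c] wm ev' by simp
    have s: "Poly_Mapping.single m c = Poly_Mapping.single m' c * mon u"
      by (simp add: m mon_def mult_single)
    have "\<phi> (jcoset F (Poly_Mapping.single m' c * mon u)) = jcoset F' (psi (Poly_Mapping.single m' c) * qq u)"
      by (rule phi_mult) (simp_all add: even_poly_single[OF ev'] even_mon IH qq(2))
    then show ?thesis by (simp add: s psi_mult psi_mon)
  qed
qed

lemma phi_psi:
  assumes "even_poly p"
  shows "\<phi> (jcoset F p) = jcoset F' (psi p)"
proof -
  have "\<phi> (jcoset F (\<Sum>m\<in>Poly_Mapping.keys p. Poly_Mapping.single m (Poly_Mapping.lookup p m)))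
     = jcoset F' (\<Sum>m\<in>Poly_Mapping.keys p. psi (Poly_Mapping.single m (Poly_Mapping.lookup p m)))"
    by (rule phi_sum) (use assms in \<open>auto simp: even_poly_def intro!: even_poly_single phi_psi_mono\<close>)
  moreover have "psi p = (\<Sum>m\<in>Poly_Mapping.keys p. psi (Poly_Mapping.single m (Poly_Mapping.lookup p m)))"
    by (subst pm_sum_single) (simp add: psi_def csub.gev_sum)
  ultimately show ?thesis using pm_sum_single[of p] by simp
qed

end


lemma lin_comp: "(\<Sum>j\<in>UNIV. const (c j) * (\<Sum>m\<in>UNIV. const (d j m) * pX m)) = (\<Sum>m\<in>UNIV. const (\<Sum>j\<in>UNIV. c j * d j m) * pX m)"
proof -
  have "(\<Sum>j\<in>UNIV. const (c j) * (\<Sum>m\<in>UNIV. const (d j m) * pX m)) = (\<Sum>j\<in>UNIV. \<Sum>m\<in>UNIV. const (c j * d j m) * pX m)"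
    by (simp add: sum_distrib_left const_mult mult.assoc)
  also have "\<dots> = (\<Sum>m\<in>UNIV. \<Sum>j\<in>UNIV. const (c j * d j m) * pX m)"
    by (rule sum.swap)
  also have "\<dots> = (\<Sum>m\<in>UNIV. const (\<Sum>j\<in>UNIV. c j * d j m) * pX m)"
    by (simp add: sum_distrib_right const_sum)
  finally show ?thesis .
qed

lemma sum_delta_pX: "(\<Sum>m\<in>UNIV. const (if k = m then 1 else 0) * pX m) = pX k"
  by (cases k) (simp_all add: sum_idx)

context ctx
begin

lemma aw_cancel: "const aw * (const (1 / aw) * Z) = Z"
proof -
  have "const aw * (const (1 / aw) * Z) = const (aw * (1 / aw)) * Z"
    by (simp only: const_mult mult.assoc)
  also have "aw * (1 / aw) = 1" using aw_nz by simp
  finally show ?thesis by simp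
qed

lemma aw_cancel': "const (1 / aw) * (const aw * Z) = Z"
  using aw_cancel[of Z] by (simp add: algebra_simps)

lemma det_AA: "det3 AA \<noteq> 0"
  by (rule det_nz) (rule AA_inj)

definition linv :: "idx \<Rightarrow> mpoly" where "linv k = (\<Sum>j\<in>UNIV. const (inv3 AA k j) * pX j)"

fun sig0 :: "var \<Rightarrow> mpoly" where
  "sig0 X1 = linv I1" | "sig0 X2 = linv I2" | "sig0 X3 = linv I3" | "sig0 Y = 0"

fun sig' :: "var \<Rightarrow> mpoly" where
  "sig' X1 = linv I1" | "sig' X2 = linv I2" | "sig' X3 = linv I3"
| "sig' Y = const (1 / aw) * (pvar Y - subst sig0 (QQ W))"

definition psi' :: "mpoly \<Rightarrow> mpoly" where "psi' = subst sig'"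

lemma psi_linv: "psi (linv k) = pX k"
proof -
  have "psi (linv k) = (\<Sum>j\<in>UNIV. const (inv3 AA k j) * ll j)"
    by (simp add: linv_def psi_def csub.gev_sum csub.gev_mult csub.gev_const psi_pX[unfolded psi_def])
  also have "\<dots> = (\<Sum>m\<in>UNIV. const (\<Sum>j\<in>UNIV. inv3 AA k j * AA j m) * pX m)"
    unfolding ll_def by (rule lin_comp)
  also have "\<dots> = pX k" using inv3_left[OF det_AA] sum_delta_pX by simp
  finally show ?thesis .
qed

lemma psi'_pX: "psi' (pX j) = linv j"
  by (cases j) (simp_all add: psi'_def csub.gev_pvar)

lemma psi'_ll: "psi' (ll k) = pX k"
proof -
  have "psi' (ll k) = (\<Sum>j\<in>UNIV. const (AA k j) * linv j)"
    by (simp add: ll_def psi'_def csub.gev_sum csub.gev_mult csub.gev_const psi'_pX[unfolded psi'_def])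
  also have "\<dots> = (\<Sum>m\<in>UNIV. const (\<Sum>j\<in>UNIV. AA k j * inv3 AA j m) * pX m)"
    unfolding linv_def by (rule lin_comp)
  also have "\<dots> = pX k" using inv3_right[OF det_AA] sum_delta_pX by simp
  finally show ?thesis .
qed

lemma qq_W: "qq W = QQ W + const aw * pvar Y"
  by (simp add: qq_QQ bb_def aw_def)

lemma psi'_psi_var: "psi' (psi (pvar v)) = pvar v"
proof (cases v)
  case Y
  have "psi' (QQ W) = subst sig0 (QQ W)"
    unfolding psi'_def by (rule csub.gev_yfree_cong[OF y_free_QQ]) simp_all
  moreover have "psi (pvar Y) = QQ W + const aw * pvar Y" by (simp add: psi_def csub.gev_pvar qq_W)
  ultimately have "psi' (psi (pvar Y)) = subst sig0 (QQ W) + const aw * (const (1 / aw) * (pvar Y - subst sig0 (QQ W)))"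
    by (simp add: psi'_def csub.gev_add csub.gev_mult csub.gev_const csub.gev_pvar)
  also have "\<dots> = pvar Y"
    by (simp add: aw_cancel)
  finally show ?thesis using Y by simp
qed (simp_all add: psi_def[symmetric] psi'_ll, simp_all add: psi_def csub.gev_pvar psi'_ll)

lemma psi_psi'_var: "psi (psi' (pvar v)) = pvar v"
proof (cases v)
  case Y
  have "psi (subst sig0 (QQ W)) = subst (\<lambda>v. psi (sig0 v)) (QQ W)"
    unfolding psi_def by (rule subst_subst)
  also have "\<dots> = subst pvar (QQ W)"
    by (rule csub.gev_yfree_cong[OF y_free_QQ]) (simp_all add: psi_linv)
  also have "\<dots> = QQ W" by (rule subst_pvar)
  finally have e: "psi (subst sig0 (QQ W)) = QQ W" .
  have "psi (psi' (pvar Y)) = const (1 / aw) * (qq W - psi (subst sig0 (QQ W)))"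
    by (simp add: psi'_def csub.gev_pvar psi_mult psi_const psi_def[symmetric] csub.gev_diff)
      (simp add: psi_def csub.gev_diff csub.gev_pvar)
  also have "\<dots> = pvar Y" by (simp add: e qq_W aw_cancel')
  finally show ?thesis using Y by simp
qed (simp_all add: psi'_def csub.gev_pvar psi_linv)

lemma psi'_psi: "psi' (psi p) = p"
proof -
  have "psi' (psi p) = subst (\<lambda>v. psi' (sig v)) p" unfolding psi'_def psi_def by (rule subst_subst)
  also have "(\<lambda>v. psi' (sig v)) = pvar"
  proof
    fix v show "psi' (sig v) = pvar v" using psi'_psi_var[of v] by (simp add: psi_def csub.gev_pvar)
  qed
  finally show ?thesis by (simp add: subst_pvar)
qed

lemma psi_psi': "psi (psi' p) = p"
proof -
  have "psi (psi' p) = subst (\<lambda>v. psi (sig' v)) p" unfolding psi'_def psi_def by (rule subst_subst)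
  also have "(\<lambda>v. psi (sig' v)) = pvar"
  proof
    fix v show "psi (sig' v) = pvar v" using psi_psi'_var[of v] by (simp add: psi'_def csub.gev_pvar)
  qed
  finally show ?thesis by (simp add: subst_pvar)
qed

lemma psi_auto: "graded_alg_auto psi"
  unfolding graded_alg_auto_def
proof (intro conjI allI impI)
  show "psi \<in> ring_iso mpoly_ring mpoly_ring"
  proof (rule ring_iso_memI)
    show "bij_betw psi (carrier mpoly_ring) (carrier mpoly_ring)"
      by (rule bij_betwI[of _ _ _ psi']) (simp_all add: psi'_psi psi_psi')
  qed (simp_all add: psi_mult psi_add psi_one)
next
  fix c p show "psi (const c * p) = const c * psi p" by (simp add: psi_mult psi_const)
next
  fix d p assume "homogeneous d p" then show "homogeneous d (psi p)" by (rule psi_homog)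
qed

end


theorem proposition4p9:
  fixes g h g' h' :: mpoly and \<phi> :: "mpoly set \<Rightarrow> mpoly set"
  assumes "y_free g" "homogeneous 4 g" "y_free h" "homogeneous 6 h"
      and "y_free g'" "homogeneous 4 g'" "y_free h'" "homogeneous 6 h'"
      and "graded_alg_iso_even (pvar Y ^ 3 + g * pvar Y + h) (pvar Y ^ 3 + g' * pvar Y + h') \<phi>"
  shows "\<exists>\<psi>. graded_alg_auto \<psi> \<and>
           (\<forall>p. even_poly p \<longrightarrow>
              \<phi> (jcoset (pvar Y ^ 3 + g * pvar Y + h) p)
                = jcoset (pvar Y ^ 3 + g' * pvar Y + h') (\<psi> p))"
proof -
  interpret c: ctx g h g' h' \<phi>
    using assms by unfold_locales (simp_all add: FF_def)
  show ?thesis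
  proof (intro exI conjI allI impI)
    show "graded_alg_auto c.psi" by (rule c.psi_auto)
  next
    fix p assume "even_poly p"
    then show "\<phi> (jcoset (pvar Y ^ 3 + g * pvar Y + h) p) = jcoset (pvar Y ^ 3 + g' * pvar Y + h') (c.psi p)"
      using c.phi_psi by (simp add: FF_def)
  qed
qed

end
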